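(* Let $\mathcal A,\mathcal B$ be finite alphabets, let $\sigma:\mathcal A^*\to\mathcal B^*$ be a non-erasing monoid morphism, and let $X\subseteq\mathcal A^{\mathbb Z}$ be a subshift. Write $\sigma=\alpha_\sigma\circ\pi_\sigma$ with $\pi_\sigma:\mathcal A^*\to\mathcal A_\sigma^*$ the subdivision morphism and $\alpha_\sigma:\mathcal A_\sigma^*\to\mathcal B^*$ the associated letter-to-letter morphism, and let $\alpha^X_\sigma:\pi_\sigma(X)\to\sigma(X)$ be the restriction/co-restriction of $\alpha_\sigma^{\mathbb Z}:\mathcal A_\sigma^{\mathbb Z}\to\mathcal B^{\mathbb Z}$. Then the following are equivalent: (1) $\sigma$ is recognizable in $X$; (2) $\alpha^X_\sigma$ is an isomorphism of subshifts (a shift-commuting homeomorphism); (3) $\alpha_\sigma$ is shift-orbit injective and shift-period preserving in $\pi_\sigma(X)$; (4) $\sigma$ is shift-orbit injective and shift-period preserving in $X$.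
   Context: A subshift $X\subseteq\mathcal A^{\mathbb Z}$ is a non-empty closed subset invariant under the shift $T$, $T(\mathbf x)_i=x_{i+1}$. A morphism $\sigma$ is non-erasing if $|\sigma(a)|\ge1$ for all letters $a$. For $\mathbf x=\ldots x_{-1}x_0x_1\ldots\in\mathcal A^{\mathbb Z}$, $\sigma^{\mathbb Z}(\mathbf x)$ is the biinfinite word whose positive half $\mathbf y_{[1,\infty)}$ is $\sigma(x_1)\sigma(x_2)\ldots$ and whose negative part is $\ldots\sigma(x_{-1})\sigma(x_0)$ (ending at index $0$). The image subshift $\sigma(X)$ is the smallest subshift containing $\sigma^{\mathbb Z}(X)$ (equivalently the union of the shift-orbits of the $\sigma^{\mathbb Z}(\mathbf x)$, $\mathbf x\in X$). Subdivision: $\mathcal A_\sigma=\{a(k): a\in\mathcal A,\ 1\le k\le|\sigma(a)|\}$, $\pi_\sigma(a)=a(1)a(2)\cdots a(|\sigma(a)|)$, and $\alpha_\sigma(a(k))$ is the $k$-th letter of $\sigma(a)$. $\sigma$ is recognizable in $X$ if: whenever $\mathbf x,\mathbf x'\in X$, $\mathbf y\in\mathcal B^{\mathbb Z}$ satisfy $\mathbf y=T^k(\sigma^{\mathbb Z}(\mathbf x))=T^\ell(\sigma^{\mathbb Z}(\mathbf x'))$ with $0\le k\le|\sigma(x_1)|-1$ and $0\le\ell\le|\sigma(x'_1)|-1$, then $\mathbf x=\mathbf x'$ and $k=\ell$. $\sigma$ is shift-orbit injective in $X$ if for $\mathbf x,\mathbf y\in X$, $\sigma^{\mathbb Z}(\mathbf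 x)$ and $\sigma^{\mathbb Z}(\mathbf y)$ lie in the same shift-orbit iff $\mathbf x,\mathbf y$ lie in the same shift-orbit. $\sigma$ is shift-period preserving in $X$ if for every periodic word $w^{\pm\infty}=\ldots www\ldots\in X$ ($w$ non-empty), $w$ is a proper power (i.e. $w=u^m$ with $m\ge2$) iff $\sigma(w)$ is a proper power. *)

theory Defs
  imports "HOL-Analysis.Analysis"
begin

definition shiftZ :: "int \<Rightarrow> (int \<Rightarrow> 'a) \<Rightarrow> (int \<Rightarrow> 'a)" where
  "shiftZ k x = (\<lambda>i. x (i + k))"

definition fullshift_top :: "(int \<Rightarrow> 'a) topology" where
  "fullshift_top = product_topology (\<lambda>_. discrete_topology UNIV) UNIV"

definition subshift :: "(int \<Rightarrow> 'a) set \<Rightarrow> bool" where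
  "subshift X \<longleftrightarrow> X \<noteq> {} \<and> closedin fullshift_top X \<and> shiftZ 1 ` X = X"

definition non_erasing :: "('a \<Rightarrow> 'b list) \<Rightarrow> bool" where
  "non_erasing \<sigma> \<longleftrightarrow> (\<forall>a. \<sigma> a \<noteq> [])"

definition cumlen :: "('a \<Rightarrow> 'b list) \<Rightarrow> (int \<Rightarrow> 'a) \<Rightarrow> int \<Rightarrow> int" where
  "cumlen \<sigma> x n = (if 0 \<le> n then (\<Sum>j\<in>{1..n}. int (length (\<sigma> (x j))))
                    else - (\<Sum>j\<in>{n+1..0}. int (length (\<sigma> (x j)))))"

text \<open>sigma^Z(x): sigma(x_n) occupies positions cumlen(n-1)+1 .. cumlen(n).\<close>
definition morphZ :: "('a \<Rightarrow> 'b list) \<Rightarrow> (int \<Rightarrow> 'a) \<Rightarrow> (int \<Rightarrow> 'b)" where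
  "morphZ \<sigma> x = (\<lambda>i. let n = (THE n. cumlen \<sigma> x (n - 1) < i \<and> i \<le> cumlen \<sigma> x n)
                     in \<sigma> (x n) ! nat (i - cumlen \<sigma> x (n - 1) - 1))"

definition image_subshift :: "('a \<Rightarrow> 'b list) \<Rightarrow> (int \<Rightarrow> 'a) set \<Rightarrow> (int \<Rightarrow> 'b) set" where
  "image_subshift \<sigma> X = \<Inter> {Y. subshift Y \<and> morphZ \<sigma> ` X \<subseteq> Y}"

text \<open>Subdivision: letter a(k) is encoded as the pair (a,k), 1 <= k <= |sigma a|.\<close>
definition subdiv :: "('a \<Rightarrow> 'b list) \<Rightarrow> 'a \<Rightarrow> ('a \<times> nat) list" where
  "subdiv \<sigma> a = map (\<lambda>k. (a, k)) [1..<Suc (length (\<sigma> a))]"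

text \<open>alpha_sigma as a letter-to-letter morphism (a(k) maps to the k-th letter of sigma a).\<close>
definition subdiv_letter :: "('a \<Rightarrow> 'b list) \<Rightarrow> ('a \<times> nat) \<Rightarrow> 'b list" where
  "subdiv_letter \<sigma> c = [\<sigma> (fst c) ! (snd c - 1)]"

definition same_orbit :: "(int \<Rightarrow> 'a) \<Rightarrow> (int \<Rightarrow> 'a) \<Rightarrow> bool" where
  "same_orbit x y \<longleftrightarrow> (\<exists>k. y = shiftZ k x)"

definition recognizable :: "('a \<Rightarrow> 'b list) \<Rightarrow> (int \<Rightarrow> 'a) set \<Rightarrow> bool" where
  "recognizable \<sigma> X \<longleftrightarrow>
     (\<forall>x\<in>X. \<forall>x'\<in>X. \<forall>k l y.
        0 \<le> k \<and> k \<le> int (length (\<sigma> (x 1))) - 1 \<and>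
        0 \<le> l \<and> l \<le> int (length (\<sigma> (x' 1))) - 1 \<and>
        y = shiftZ k (morphZ \<sigma> x) \<and> y = shiftZ l (morphZ \<sigma> x')
        \<longrightarrow> x = x' \<and> k = l)"

definition orbit_injective :: "('a \<Rightarrow> 'b list) \<Rightarrow> (int \<Rightarrow> 'a) set \<Rightarrow> bool" where
  "orbit_injective \<sigma> X \<longleftrightarrow>
     (\<forall>x\<in>X. \<forall>y\<in>X. same_orbit (morphZ \<sigma> x) (morphZ \<sigma> y) \<longleftrightarrow> same_orbit x y)"

definition periodicZ :: "'a list \<Rightarrow> (int \<Rightarrow> 'a)" where
  "periodicZ w = (\<lambda>i. w ! nat (i mod int (length w)))"

definition proper_power :: "'a list \<Rightarrow> bool" where
  "proper_power w \<longleftrightarrow> (\<exists>u m. 2 \<le> m \<and> w = concat (replicate m u))"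

definition period_preserving :: "('a \<Rightarrow> 'b list) \<Rightarrow> (int \<Rightarrow> 'a) set \<Rightarrow> bool" where
  "period_preserving \<sigma> X \<longleftrightarrow>
     (\<forall>w. w \<noteq> [] \<and> periodicZ w \<in> X \<longrightarrow>
        (proper_power w \<longleftrightarrow> proper_power (concat (map \<sigma> w))))"

definition subshift_iso :: "(int \<Rightarrow> 'a) set \<Rightarrow> (int \<Rightarrow> 'b) set \<Rightarrow> ((int \<Rightarrow> 'a) \<Rightarrow> (int \<Rightarrow> 'b)) \<Rightarrow> bool" where
  "subshift_iso X Y f \<longleftrightarrow>
     homeomorphic_map (subtopology fullshift_top X) (subtopology fullshift_top Y) f \<and>
     (\<forall>x\<in>X. f (shiftZ 1 x) = shiftZ 1 (f x))"

end

theory Submission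
  imports Defs
begin


lemma shiftZ_app[simp]: "shiftZ k x i = x (i + k)" by (simp add: shiftZ_def)
lemma shiftZ_0[simp]: "shiftZ 0 x = x" by (simp add: shiftZ_def)
lemma shiftZ_shiftZ[simp]: "shiftZ a (shiftZ b x) = shiftZ (a + b) x"
  by (simp add: shiftZ_def ac_simps)
lemma shiftZ_inj: "shiftZ k x = shiftZ k y \<Longrightarrow> x = y"
  by (metis add.right_neutral add.commute diff_add_cancel shiftZ_shiftZ shiftZ_0)

lemma cumlen_0[simp]: "cumlen \<tau> x 0 = 0" by (simp add: cumlen_def)

lemma cumlen_rec: "cumlen \<tau> x n = cumlen \<tau> x (n - 1) + int (length (\<tau> (x n)))"
proof -
  define f where "f = (\<lambda>j. int (length (\<tau> (x j))))"
  have cd: "cumlen \<tau> x m = (if 0 \<le> m then sum f {1..m} else - sum f {m+1..0})" for m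
    by (simp add: cumlen_def f_def)
  show ?thesis
  proof (cases "n \<ge> 1")
    case True
    have e: "{1..n} = insert n {1..n-1}" using True by auto
    have "sum f {1..n} = f n + sum f {1..n-1}" unfolding e by (subst sum.insert) auto
    then show ?thesis using True unfolding cd f_def by simp
  next
    case False
    show ?thesis
    proof (cases "n = 0")
      case True then show ?thesis unfolding cd f_def by simp
    next
      case False
      with \<open>\<not> n \<ge> 1\<close> have "n < 0" by simp
      have e: "{n..0} = insert n {n+1..0}" using \<open>n < 0\<close> by auto
      have "sum f {n..0} = f n + sum f {n+1..0}" unfolding e by (subst sum.insert) auto
      then show ?thesis using \<open>n < 0\<close> unfolding cd f_def by simp
    qed
  qed
qed

lemma rec_unique:
  fixes f h g :: "int \<Rightarrow> int"
  assumes "f 0 = 0" "\<And>n. f n = f (n - 1) + g n" "h 0 = 0" "\<And>n. h n = h (n - 1) + g n"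
  shows "f n = h n"
proof (induct n rule: int_induct[where k=0])
  case base then show ?case using assms(1,3) by simp
next
  case (step1 i) then show ?case using assms(2)[of "i+1"] assms(4)[of "i+1"] by (simp del: )
next
  case (step2 i) then show ?case using assms(2)[of "i"] assms(4)[of "i"] by simp
qed

lemma cumlen_shift: "cumlen \<tau> (shiftZ j x) n = cumlen \<tau> x (n + j) - cumlen \<tau> x j"
proof (rule rec_unique[where g="\<lambda>n. int (length (\<tau> (x (n + j))))" and f="cumlen \<tau> (shiftZ j x)" and h="\<lambda>n. cumlen \<tau> x (n + j) - cumlen \<tau> x j"])
  show "cumlen \<tau> (shiftZ j x) 0 = 0" by simp
  show "\<And>n. cumlen \<tau> (shiftZ j x) n = cumlen \<tau> (shiftZ j x) (n - 1) + int (length (\<tau> (x (n + j))))"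
    by (subst cumlen_rec) simp
  show "cumlen \<tau> x (0 + j) - cumlen \<tau> x j = 0" by simp
  show "\<And>n. cumlen \<tau> x (n + j) - cumlen \<tau> x j = cumlen \<tau> x (n - 1 + j) - cumlen \<tau> x j + int (length (\<tau> (x (n + j))))"
  proof -
    fix n
    have "cumlen \<tau> x (n + j) = cumlen \<tau> x (n + j - 1) + int (length (\<tau> (x (n + j))))"
      by (rule cumlen_rec)
    moreover have "n + j - 1 = n - 1 + j" by simp
    ultimately show "cumlen \<tau> x (n + j) - cumlen \<tau> x j = cumlen \<tau> x (n - 1 + j) - cumlen \<tau> x j + int (length (\<tau> (x (n + j))))"
      by simp
  qed
qed

lemma cumlen_cong_len:
  assumes "\<And>a. length (\<tau> a) = length (\<rho> a)"
  shows "cumlen \<tau> x = cumlen \<rho> x"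
  using assms by (auto simp: cumlen_def fun_eq_iff)

lemma cumlen_local:
  assumes "\<And>j. \<bar>j\<bar> \<le> \<bar>n\<bar> + 1 \<Longrightarrow> x j = y j"
  shows "cumlen \<tau> x n = cumlen \<tau> y n"
  unfolding cumlen_def using assms by (auto intro!: sum.cong)

context
  fixes \<tau> :: "'a \<Rightarrow> 'b list"
  assumes ne: "non_erasing \<tau>"
begin

lemma len_pos: "length (\<tau> a) > 0" using ne by (simp add: non_erasing_def)

lemma cumlen_step: "cumlen \<tau> x (n - 1) < cumlen \<tau> x n"
  using cumlen_rec[of \<tau> x n] len_pos[of "x n"] by simp

lemma cumlen_mono_diff:
  assumes "m \<le> n" shows "cumlen \<tau> x n - cumlen \<tau> x m \<ge> n - m"
  using assms
proof (induct n rule: int_ge_induct)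
  case base then show ?case by simp
next
  case (step i) then show ?case using cumlen_step[of x "i+1"] by simp
qed

lemma cumlen_less: "m < n \<Longrightarrow> cumlen \<tau> x m < cumlen \<tau> x n"
  using cumlen_mono_diff[of m n x] by simp

lemma cumlen_le_iff: "cumlen \<tau> x m \<le> cumlen \<tau> x n \<longleftrightarrow> m \<le> n"
  by (metis cumlen_less linorder_not_less order_le_less)

lemma block_exists: "\<exists>n. cumlen \<tau> x (n - 1) < i \<and> i \<le> cumlen \<tau> x n"
proof (induct i rule: int_induct[where k=0])
  case base then show ?case using cumlen_step[of x 0] by (intro exI[of _ 0]) simp
next
  case (step1 i)
  then obtain n where n: "cumlen \<tau> x (n - 1) < i" "i \<le> cumlen \<tau> x n" by blast
  show ?case
  proof (cases "i + 1 \<le> cumlen \<tau> x n")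
    case True then show ?thesis using n by (intro exI[of _ n]) auto
  next
    case False
    then show ?thesis using n cumlen_step[of x "n+1"] by (intro exI[of _ "n+1"]) simp
  qed
next
  case (step2 i)
  then obtain n where n: "cumlen \<tau> x (n - 1) < i" "i \<le> cumlen \<tau> x n" by blast
  show ?case
  proof (cases "cumlen \<tau> x (n - 1) < i - 1")
    case True then show ?thesis using n by auto
  next
    case False
    then show ?thesis using n cumlen_step[of x "n-1"] by (intro exI[of _ "n-1"]) simp
  qed
qed

lemma block_unique:
  assumes "cumlen \<tau> x (n - 1) < i" "i \<le> cumlen \<tau> x n"
    "cumlen \<tau> x (m - 1) < i" "i \<le> cumlen \<tau> x m"
  shows "n = m"
proof (rule ccontr)
  assume "n \<noteq> m"
  then have "n \<le> m - 1 \<or> m \<le> n - 1" by auto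
  then show False
  proof
    assume "n \<le> m - 1"
    then have "cumlen \<tau> x n \<le> cumlen \<tau> x (m - 1)" by (simp add: cumlen_le_iff)
    then show False using assms by linarith
  next
    assume "m \<le> n - 1"
    then have "cumlen \<tau> x m \<le> cumlen \<tau> x (n - 1)" by (simp add: cumlen_le_iff)
    then show False using assms by linarith
  qed
qed

lemma block_bound':
  assumes "cumlen \<tau> x (n - 1) < i" "i \<le> cumlen \<tau> x n"
  shows "(1 \<le> n \<and> n \<le> i) \<or> (i \<le> n \<and> n \<le> 0)"
proof (cases "n \<ge> 1")
  case True
  have "cumlen \<tau> x (n-1) - cumlen \<tau> x 0 \<ge> n - 1" using cumlen_mono_diff[of 0 "n-1" x] True by simp
  then have "n \<le> i" using assms(1) by simp
  then show ?thesis using True by simp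
next
  case False
  have "cumlen \<tau> x 0 - cumlen \<tau> x n \<ge> 0 - n" using cumlen_mono_diff[of n 0 x] False by simp
  then have "i \<le> n" using assms(2) by simp
  then show ?thesis using False by simp
qed

lemma block_bound:
  assumes "cumlen \<tau> x (n - 1) < i" "i \<le> cumlen \<tau> x n"
  shows "\<bar>n\<bar> \<le> \<bar>i\<bar>"
  using block_bound'[OF assms] by (elim disjE conjE) (simp_all add: abs_if)

lemma morphZ_eq:
  assumes "cumlen \<tau> x (n - 1) < i" "i \<le> cumlen \<tau> x n"
  shows "morphZ \<tau> x i = \<tau> (x n) ! nat (i - cumlen \<tau> x (n - 1) - 1)"
proof -
  have "(THE n. cumlen \<tau> x (n - 1) < i \<and> i \<le> cumlen \<tau> x n) = n"
    using assms block_unique by blast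
  then show ?thesis by (simp add: morphZ_def)
qed

lemma morphZ_block:
  assumes "0 \<le> r" "r < int (length (\<tau> (x n)))"
  shows "morphZ \<tau> x (cumlen \<tau> x (n - 1) + 1 + r) = \<tau> (x n) ! nat r"
proof -
  have c: "cumlen \<tau> x n = cumlen \<tau> x (n - 1) + int (length (\<tau> (x n)))" by (rule cumlen_rec)
  have "morphZ \<tau> x (cumlen \<tau> x (n - 1) + 1 + r) = \<tau> (x n) ! nat (cumlen \<tau> x (n - 1) + 1 + r - cumlen \<tau> x (n - 1) - 1)"
    by (rule morphZ_eq) (use assms c in linarith)+
  then show ?thesis by simp
qed

end


context
  fixes \<tau> :: "'a \<Rightarrow> 'b list"
  assumes ne: "non_erasing \<tau>"
begin

lemma morphZ_shift: "morphZ \<tau> (shiftZ j x) = shiftZ (cumlen \<tau> x j) (morphZ \<tau> x)"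
proof
  fix i
  obtain n where n: "cumlen \<tau> (shiftZ j x) (n - 1) < i" "i \<le> cumlen \<tau> (shiftZ j x) n"
    using block_exists[OF ne] by blast
  have n': "cumlen \<tau> x (n + j - 1) < i + cumlen \<tau> x j" "i + cumlen \<tau> x j \<le> cumlen \<tau> x (n + j)"
    using n unfolding cumlen_shift by (simp_all add: algebra_simps)
  have "morphZ \<tau> (shiftZ j x) i = \<tau> (x (n + j)) ! nat (i - cumlen \<tau> (shiftZ j x) (n - 1) - 1)"
    using morphZ_eq[OF ne n] by simp
  also have "\<dots> = \<tau> (x (n + j)) ! nat (i + cumlen \<tau> x j - cumlen \<tau> x (n + j - 1) - 1)"
    unfolding cumlen_shift by (simp add: algebra_simps)
  also have "\<dots> = morphZ \<tau> x (i + cumlen \<tau> x j)"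
    using morphZ_eq[OF ne n'] by simp
  finally show "morphZ \<tau> (shiftZ j x) i = shiftZ (cumlen \<tau> x j) (morphZ \<tau> x) i" by simp
qed

lemma morphZ_local:
  assumes "\<And>j. \<bar>j\<bar> \<le> \<bar>i\<bar> + 2 \<Longrightarrow> x j = y j"
  shows "morphZ \<tau> x i = morphZ \<tau> y i"
proof -
  obtain n where n: "cumlen \<tau> x (n - 1) < i" "i \<le> cumlen \<tau> x n"
    using block_exists[OF ne] by blast
  have b: "\<bar>n\<bar> \<le> \<bar>i\<bar>" using block_bound[OF ne n] .
  have c1: "cumlen \<tau> x n = cumlen \<tau> y n"
  proof (rule cumlen_local)
    fix j :: int assume "\<bar>j\<bar> \<le> \<bar>n\<bar> + 1"
    then have "\<bar>j\<bar> \<le> \<bar>i\<bar> + 2" using b by arith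
    then show "x j = y j" by (rule assms)
  qed
  have c2: "cumlen \<tau> x (n - 1) = cumlen \<tau> y (n - 1)"
  proof (rule cumlen_local)
    fix j :: int assume "\<bar>j\<bar> \<le> \<bar>n - 1\<bar> + 1"
    then have "\<bar>j\<bar> \<le> \<bar>i\<bar> + 2" using b by arith
    then show "x j = y j" by (rule assms)
  qed
  have "\<bar>n\<bar> \<le> \<bar>i\<bar> + 2" using b by arith
  then have xn: "x n = y n" by (rule assms)
  have n2: "cumlen \<tau> y (n - 1) < i" "i \<le> cumlen \<tau> y n" using n c1 c2 by auto
  show ?thesis using morphZ_eq[OF ne n] morphZ_eq[OF ne n2] c2 xn by simp
qed

lemma morphZ_prefix:
  "i < length (concat (map (\<lambda>k. \<tau> (x (int k))) [1..<Suc n])) \<Longrightarrow>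
   morphZ \<tau> x (int i + 1) = concat (map (\<lambda>k. \<tau> (x (int k))) [1..<Suc n]) ! i"
proof (induct n arbitrary: i)
  case 0 then show ?case by simp
next
  case (Suc n)
  let ?W = "concat (map (\<lambda>k. \<tau> (x (int k))) [1..<Suc n])"
  have W: "concat (map (\<lambda>k. \<tau> (x (int k))) [1..<Suc (Suc n)]) = ?W @ \<tau> (x (int (Suc n)))"
    by simp
  have lenW: "int (length ?W) = cumlen \<tau> x (int n)"
  proof (induct n)
    case 0 then show ?case by simp
  next
    case (Suc n) then show ?case using cumlen_rec[of \<tau> x "int (Suc n)"] by simp
  qed
  show ?case
  proof (cases "i < length ?W")
    case True then show ?thesis using Suc by (simp add: W nth_append)
  next
    case False
    define r where "r = int i - int (length ?W)"
    have r: "0 \<le> r" "r < int (length (\<tau> (x (int (Suc n)))))" using False Suc(2) by (auto simp: r_def W)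
    have mb: "morphZ \<tau> x (cumlen \<tau> x (int (Suc n) - 1) + 1 + r) = \<tau> (x (int (Suc n))) ! nat r"
      by (rule morphZ_block[OF ne, where x=x and n="int (Suc n)", OF r])
    have e: "cumlen \<tau> x (int (Suc n) - 1) + 1 + r = int i + 1" using lenW by (simp add: r_def)
    have m: "morphZ \<tau> x (int i + 1) = \<tau> (x (int (Suc n))) ! nat r" using mb unfolding e .
    have "nat r = i - length ?W" using False by (simp add: r_def)
    then show ?thesis using False m unfolding W by (simp add: nth_append del: upt_Suc)
  qed
qed

lemma cumlen_len_concat:
  "int (length (concat (map (\<lambda>k. \<tau> (x (int k))) [1..<Suc n]))) = cumlen \<tau> x (int n)"
proof (induct n)
  case 0 then show ?case by simp
next
  case (Suc n) then show ?case using cumlen_rec[of \<tau> x "int (Suc n)"] by simp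
qed

end

lemma letter_cumlen:
  assumes "\<And>a. length (\<rho> a) = 1"
  shows "cumlen \<rho> x n = n"
proof (rule rec_unique[where g="\<lambda>_. 1" and f="cumlen \<rho> x" and h="\<lambda>n. n"])
  show "\<And>n. cumlen \<rho> x n = cumlen \<rho> x (n - 1) + 1"
    by (subst cumlen_rec) (simp add: assms)
qed simp_all

lemma letter_morphZ:
  assumes "\<And>a. length (\<rho> a) = 1"
  shows "morphZ \<rho> x i = hd (\<rho> (x i))"
proof -
  have ne: "non_erasing \<rho>" unfolding non_erasing_def using assms by (metis list.size(3) zero_neq_one)
  have "morphZ \<rho> x i = \<rho> (x i) ! nat (i - cumlen \<rho> x (i - 1) - 1)"
    by (rule morphZ_eq[OF ne]) (simp_all add: letter_cumlen[OF assms])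
  also have "\<dots> = \<rho> (x i) ! 0" by (simp add: letter_cumlen[OF assms])
  also have "\<dots> = hd (\<rho> (x i))" using assms[of "x i"] by (cases "\<rho> (x i)") auto
  finally show ?thesis .
qed

lemma subdiv_letter_len: "length (subdiv_letter \<sigma> c) = 1" by (simp add: subdiv_letter_def)
lemma subdiv_len: "length (subdiv \<sigma> a) = length (\<sigma> a)" by (simp add: subdiv_def del: upt_Suc)

lemma morphZ_subdiv_letter: "morphZ (subdiv_letter \<sigma>) z i = \<sigma> (fst (z i)) ! (snd (z i) - 1)"
  by (simp add: letter_morphZ[OF subdiv_letter_len] subdiv_letter_def)

lemma ne_subdiv: "non_erasing \<sigma> \<Longrightarrow> non_erasing (subdiv \<sigma>)"
  by (simp add: non_erasing_def subdiv_def del: upt_Suc)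

lemma ne_subdiv_letter: "non_erasing (subdiv_letter \<sigma>)"
  by (simp add: non_erasing_def subdiv_letter_def)

lemma cumlen_subdiv: "cumlen (subdiv \<sigma>) x = cumlen \<sigma> x"
  by (rule cumlen_cong_len) (simp add: subdiv_len)

lemma morphZ_subdiv:
  assumes ne: "non_erasing \<sigma>" and that: "cumlen \<sigma> x (n - 1) < i" "i \<le> cumlen \<sigma> x n"
  shows "morphZ (subdiv \<sigma>) x i = (x n, nat (i - cumlen \<sigma> x (n - 1)))"
proof -
  have "morphZ (subdiv \<sigma>) x i = subdiv \<sigma> (x n) ! nat (i - cumlen \<sigma> x (n - 1) - 1)"
    using morphZ_eq[OF ne_subdiv[OF ne], of x n i] that by (simp add: cumlen_subdiv)
  moreover have "nat (i - cumlen \<sigma> x (n - 1) - 1) < length (\<sigma> (x n))"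
    using that cumlen_rec[of \<sigma> x n] by simp
  moreover have "1 + (nat (i - cumlen \<sigma> x (n - 1)) - 1) = nat (i - cumlen \<sigma> x (n - 1))"
    using that by simp
  ultimately show ?thesis using that by (simp add: subdiv_def del: upt_Suc)
qed

lemma alpha_pi:
  assumes ne: "non_erasing \<sigma>"
  shows "morphZ (subdiv_letter \<sigma>) (morphZ (subdiv \<sigma>) x) = morphZ \<sigma> x"
proof
  fix i
  obtain n where n: "cumlen \<sigma> x (n - 1) < i" "i \<le> cumlen \<sigma> x n"
    using block_exists[OF ne] by blast
  show "morphZ (subdiv_letter \<sigma>) (morphZ (subdiv \<sigma>) x) i = morphZ \<sigma> x i"
    using morphZ_subdiv[OF ne n] morphZ_eq[OF ne n] n
    by (simp add: morphZ_subdiv_letter nat_diff_distrib)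
qed


lemma subshift_shift:
  assumes "subshift X" "x \<in> X" shows "shiftZ k x \<in> X"
proof -
  have X1: "shiftZ 1 ` X = X" using assms(1) by (simp add: subshift_def)
  have up: "shiftZ 1 z \<in> X" if "z \<in> X" for z using X1 that by blast
  have down: "shiftZ (-1) z \<in> X" if "z \<in> X" for z
  proof -
    obtain y where "y \<in> X" "z = shiftZ 1 y" using X1 \<open>z \<in> X\<close> by blast
    then show ?thesis by simp
  qed
  show ?thesis
  proof (induct k rule: int_induct[where k=0])
    case base then show ?case using assms by simp
  next
    case (step1 i) then show ?case using up[of "shiftZ i x"] by (simp del: shiftZ_app add: add.commute)
  next
    case (step2 i) then show ?case using down[of "shiftZ i x"] by (simp del: shiftZ_app)
  qed
qed

lemma per_app: "shiftZ p f = f \<Longrightarrow> f (i + p) = f i"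
  by (metis shiftZ_app)

lemma per_mult:
  assumes "shiftZ p f = f" shows "shiftZ (k * p) f = f"
proof (induct k rule: int_induct[where k=0])
  case base then show ?case by simp
next
  case (step1 i)
  have "shiftZ ((i + 1) * p) f = shiftZ p (shiftZ (i * p) f)" by (simp add: algebra_simps)
  then show ?case using step1 assms by simp
next
  case (step2 i)
  have "shiftZ ((i - 1) * p) f = shiftZ ((i - 1) * p) (shiftZ p f)" using assms by simp
  also have "\<dots> = shiftZ (i * p) f" by (simp add: algebra_simps)
  finally show ?case using step2 by simp
qed

lemma per_add: "shiftZ a f = f \<Longrightarrow> shiftZ b f = f \<Longrightarrow> shiftZ (a + b) f = f"
  by (metis shiftZ_shiftZ)

lemma per_gcd:
  assumes "shiftZ a f = f" "shiftZ b f = f" shows "shiftZ (gcd a b) f = f"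
proof -
  obtain u v where "u * a + v * b = gcd a b" using bezout_int by blast
  then show ?thesis using per_add[OF per_mult[OF assms(1), of u] per_mult[OF assms(2), of v]] by simp
qed

lemma per_mod:
  assumes "shiftZ p f = f" shows "f i = f (i mod p)"
proof -
  have "f (i mod p + (i div p) * p) = f (i mod p)"
    using per_app[OF per_mult[OF assms, of "i div p"], of "i mod p"] .
  then show ?thesis by (simp add: mod_div_mult_eq)
qed

lemma concat_replicate_nth:
  "i < m * length u \<Longrightarrow> concat (replicate m u) ! i = u ! (i mod length u)"
proof (induct m arbitrary: i)
  case 0 then show ?case by simp
next
  case (Suc m)
  show ?case
  proof (cases "i < length u")
    case True then show ?thesis by (simp add: nth_append)
  next
    case False
    then have "i - length u < m * length u" using Suc(2) by simp
    then have "concat (replicate m u) ! (i - length u) = u ! ((i - length u) mod length u)" using Suc(1) by blast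
    moreover have "(i - length u) mod length u = i mod length u" using False by (simp add: mod_if)
    ultimately show ?thesis using False by (simp add: nth_append)
  qed
qed

lemma length_concat_replicate: "length (concat (replicate m u)) = m * length u"
  by (induct m) auto

lemma pp_of_period:
  assumes "0 < d" "d < length W" "d dvd length W" "\<And>i. i < length W \<Longrightarrow> W ! i = W ! (i mod d)"
  shows "proper_power W"
proof -
  define m where "m = length W div d"
  have md: "m * d = length W" using assms(3) by (simp add: m_def)
  have m2: "2 \<le> m"
  proof (rule ccontr)
    assume "\<not> 2 \<le> m"
    then have "m \<le> 1" by simp
    then have "m * d \<le> d" by simp
    then show False using md assms(2) by simp
  qed
  have lt: "length (take d W) = d" using assms(2) by simp
  have "W = concat (replicate m (take d W))"
  proof (rule nth_equalityI)
    show "length W = length (concat (replicate m (take d W)))"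
      using assms(2) md by (simp add: length_concat_replicate min_def)
    fix i assume i: "i < length W"
    have "concat (replicate m (take d W)) ! i = take d W ! (i mod d)"
      using concat_replicate_nth[of i m "take d W"] i md lt by simp
    also have "\<dots> = W ! (i mod d)" using assms(1) by simp
    finally show "W ! i = concat (replicate m (take d W)) ! i" using assms(4)[OF i] by simp
  qed
  then show ?thesis unfolding proper_power_def using m2 by blast
qed

lemma concat_map_concat_replicate:
  "concat (map \<tau> (concat (replicate m u))) = concat (replicate m (concat (map \<tau> u)))"
  by (induct m) auto

lemma pp_map: "proper_power w \<Longrightarrow> proper_power (concat (map \<tau> w))"
  unfolding proper_power_def by (metis concat_map_concat_replicate)

lemma pp_props:
  assumes "w = concat (replicate m u)" "2 \<le> m" "w \<noteq> []"
  shows "0 < length u" "length u < length w" "length u dvd length w"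
        "\<And>i. i < length w \<Longrightarrow> w ! i = u ! (i mod length u)"
proof -
  have lw: "length w = m * length u" using assms(1) by (simp add: length_concat_replicate)
  show "0 < length u" using assms lw by (cases "length u") auto
  then show "length u < length w" using lw assms(2) by (simp add: less_le_trans[of _ "2 * length u"])
  show "length u dvd length w" using lw by simp
  show "\<And>i. i < length w \<Longrightarrow> w ! i = u ! (i mod length u)"
    using assms(1) lw concat_replicate_nth by metis
qed

lemma periodicZ_period: "w \<noteq> [] \<Longrightarrow> shiftZ (int (length w)) (periodicZ w) = periodicZ w"
  by (rule ext) (simp add: periodicZ_def)

lemma periodicZ_of_periodic:
  assumes "0 < n" "shiftZ (int n) x = x"
  shows "periodicZ (map (\<lambda>k. x (int k)) [1..<Suc n]) = shiftZ 1 x"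
proof
  fix i
  let ?w = "map (\<lambda>k. x (int k)) [1..<Suc n]"
  have len: "length ?w = n" by simp
  have r: "0 \<le> i mod int n" "i mod int n < int n" using assms(1) by simp_all
  have "periodicZ ?w i = ?w ! nat (i mod int n)" unfolding periodicZ_def len by (rule refl)
  also have "\<dots> = x (int (1 + nat (i mod int n)))"
  proof -
    have "nat (i mod int n) < n" using r by linarith
    then show ?thesis by (simp del: upt_Suc)
  qed
  also have "\<dots> = x (i mod int n + 1)" using r by (simp add: add.commute)
  also have "\<dots> = shiftZ 1 x (i mod int n)" by simp
  also have "\<dots> = shiftZ 1 x i"
  proof -
    have "shiftZ (int n) (shiftZ 1 x) = shiftZ 1 x" using assms(2) by (metis add.commute shiftZ_shiftZ)
    then show ?thesis using per_mod by metis
  qed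
  finally show "periodicZ ?w i = shiftZ 1 x i" .
qed

lemma cumlen_period:
  assumes "shiftZ q x = x" shows "cumlen \<tau> x (a + q) = cumlen \<tau> x a + cumlen \<tau> x q"
  using cumlen_shift[of \<tau> q x a] assms by simp

lemma cumlen_period_mult:
  assumes "shiftZ n x = x" shows "cumlen \<tau> x (t * n) = t * cumlen \<tau> x n"
proof (induct t rule: int_induct[where k=0])
  case base then show ?case by simp
next
  case (step1 i)
  have "cumlen \<tau> x ((i + 1) * n) = cumlen \<tau> x (i * n + n)" by (simp add: algebra_simps)
  also have "\<dots> = cumlen \<tau> x (i * n) + cumlen \<tau> x n" by (rule cumlen_period[OF assms])
  finally show ?case using step1 by (simp add: algebra_simps)
next
  case (step2 i)
  have "cumlen \<tau> x (i * n) = cumlen \<tau> x ((i - 1) * n + n)" by (simp add: algebra_simps)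
  also have "\<dots> = cumlen \<tau> x ((i - 1) * n) + cumlen \<tau> x n" by (rule cumlen_period[OF assms])
  finally show ?case using step2 by (simp add: algebra_simps)
qed


lemma per_ext:
  assumes "0 < L" "shiftZ (int L) f = f" "\<And>i. i < L \<Longrightarrow> f (int i + 1) = W ! i"
  shows "f i = W ! nat ((i - 1) mod int L)"
proof -
  let ?g = "shiftZ 1 f"
  have gper: "shiftZ (int L) ?g = ?g" using assms(2) by (metis add.commute shiftZ_shiftZ)
  have "f i = ?g (i - 1)" by simp
  also have "\<dots> = ?g ((i - 1) mod int L)" by (rule per_mod[OF gper])
  also have "\<dots> = f (int (nat ((i - 1) mod int L)) + 1)" using assms(1) by simp
  also have "\<dots> = W ! nat ((i - 1) mod int L)"
    by (rule assms(3)) (use assms(1) in \<open>simp add: nat_less_iff\<close>)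
  finally show ?thesis .
qed

lemma per_from_rep:
  assumes L: "0 < L" "shiftZ (int L) f = f" "\<And>i. i < L \<Longrightarrow> f (int i + 1) = W ! i"
    and d: "0 < d" "d dvd L" "\<And>i. i < L \<Longrightarrow> W ! i = W ! (i mod d)"
  shows "shiftZ (int d) f = f"
proof
  fix i
  have key: "f a = W ! nat ((a - 1) mod int d)" for a
  proof -
    have "f a = W ! nat ((a - 1) mod int L)" by (rule per_ext[OF L])
    also have "\<dots> = W ! (nat ((a - 1) mod int L) mod d)"
      by (rule d(3)) (use L(1) in \<open>simp add: nat_less_iff\<close>)
    also have "nat ((a - 1) mod int L) mod d = nat (((a - 1) mod int L) mod int d)"
      using L(1) d(1) by (simp add: nat_mod_distrib)
    also have "((a - 1) mod int L) mod int d = (a - 1) mod int d"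
      using d(2) by (simp add: mod_mod_cancel)
    finally show ?thesis by simp
  qed
  have "(i + int d - 1) mod int d = (i - 1) mod int d"
    by (metis add.commute add_diff_eq mod_add_self2)
  then show "shiftZ (int d) f i = f i" using key[of i] key[of "i + int d"] by simp
qed

context
  fixes \<tau> :: "'a \<Rightarrow> 'b list"
  assumes ne: "non_erasing \<tau>"
begin

lemma normalize: "\<exists>j k. 0 \<le> k \<and> k < int (length (\<tau> (x (j + 1)))) \<and> m = cumlen \<tau> x j + k"
proof -
  obtain n where n: "cumlen \<tau> x (n - 1) < m + 1" "m + 1 \<le> cumlen \<tau> x n"
    using block_exists[OF ne] by blast
  have "cumlen \<tau> x n = cumlen \<tau> x (n - 1) + int (length (\<tau> (x n)))" by (rule cumlen_rec)
  then show ?thesis using n by (intro exI[of _ "n - 1"] exI[of _ "m - cumlen \<tau> x (n - 1)"]) auto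
qed

lemma shift_morph: "shiftZ (cumlen \<tau> x j + k) (morphZ \<tau> x) = shiftZ k (morphZ \<tau> (shiftZ j x))"
  by (simp only: morphZ_shift[OF ne] shiftZ_shiftZ add.commute)

lemma recD:
  assumes "recognizable \<tau> X" "x \<in> X" "x' \<in> X" "0 \<le> k" "k < int (length (\<tau> (x 1)))"
    "0 \<le> l" "l < int (length (\<tau> (x' 1)))" "shiftZ k (morphZ \<tau> x) = shiftZ l (morphZ \<tau> x')"
  shows "x = x' \<and> k = l"
  using assms unfolding recognizable_def by force

lemma zero_case:
  assumes "0 \<le> k" "k < int (length (\<tau> (x 1)))" "0 \<le> l" "l < int (length (\<tau> (x (j + 1))))"
    "k = l + cumlen \<tau> x j"
  shows "j = 0"
proof (rule ccontr)
  assume "j \<noteq> 0"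
  then consider "1 \<le> j" | "j + 1 \<le> 0" by linarith
  then show False
  proof cases
    case 1
    have "cumlen \<tau> x 1 \<le> cumlen \<tau> x j" using 1 by (simp add: cumlen_le_iff[OF ne])
    moreover have "cumlen \<tau> x 1 = int (length (\<tau> (x 1)))" using cumlen_rec[of \<tau> x 1] by simp
    ultimately show False using assms by linarith
  next
    case 2
    have "cumlen \<tau> x (j + 1) \<le> cumlen \<tau> x 0" using 2 cumlen_le_iff[OF ne, where m="j+1" and n=0 and x=x] by blast
    moreover have "cumlen \<tau> x (j + 1) = cumlen \<tau> x j + int (length (\<tau> (x (j + 1))))"
      using cumlen_rec[of \<tau> x "j + 1"] by simp
    ultimately show False using assms by simp
  qed
qed

lemma rec_imp_oi:
  assumes X: "subshift X" and r: "recognizable \<tau> X"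
  shows "orbit_injective \<tau> X"
  unfolding orbit_injective_def
proof (intro ballI iffI)
  fix x y assume x: "x \<in> X" and y: "y \<in> X"
  {
    assume "same_orbit (morphZ \<tau> x) (morphZ \<tau> y)"
    then obtain m where m: "morphZ \<tau> y = shiftZ m (morphZ \<tau> x)" by (auto simp: same_orbit_def)
    obtain j k where jk: "0 \<le> k" "k < int (length (\<tau> (x (j + 1))))" "m = cumlen \<tau> x j + k"
      using normalize by blast
    have e: "shiftZ k (morphZ \<tau> (shiftZ j x)) = shiftZ 0 (morphZ \<tau> y)"
      using m jk(3) shift_morph by simp
    have xj: "shiftZ j x \<in> X" using subshift_shift[OF X x] .
    have "shiftZ j x = y \<and> k = 0"
      by (rule recD[OF r xj y]) (use jk len_pos[OF ne, of "y 1"] e in \<open>simp_all add: add.commute\<close>)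
    then show "same_orbit x y" by (auto simp: same_orbit_def)
  }
  {
    assume "same_orbit x y"
    then obtain j where "y = shiftZ j x" by (auto simp: same_orbit_def)
    then show "same_orbit (morphZ \<tau> x) (morphZ \<tau> y)"
      by (auto simp: same_orbit_def morphZ_shift[OF ne])
  }
qed

lemma map_upt_shift_eq:
  assumes "n = length w" "\<And>i. i < n \<Longrightarrow> x (int i + 1) = w ! i"
  shows "w = map (\<lambda>k. x (int k)) [1..<Suc n]"
proof (rule nth_equalityI)
  show "length w = length (map (\<lambda>k. x (int k)) [1..<Suc n])" using assms(1) by (simp del: upt_Suc)
  fix i assume "i < length w"
  then show "w ! i = map (\<lambda>k. x (int k)) [1..<Suc n] ! i"
    using assms by (simp del: upt_Suc add: add.commute)
qed

lemma rec_imp_pp: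
  assumes X: "subshift X" and r: "recognizable \<tau> X"
  shows "period_preserving \<tau> X"
  unfolding period_preserving_def
proof (intro allI impI iffI)
  fix w assume "w \<noteq> [] \<and> periodicZ w \<in> X"
  then have w: "w \<noteq> []" "periodicZ w \<in> X" by auto
  {
    assume "proper_power w" then show "proper_power (concat (map \<tau> w))" by (rule pp_map)
  }
  assume "proper_power (concat (map \<tau> w))"
  then obtain v m where vm: "2 \<le> m" "concat (map \<tau> w) = concat (replicate m v)"
    by (auto simp: proper_power_def)
  define n where "n = length w"
  define x where "x = shiftZ (-1) (periodicZ w)"
  define W where "W = concat (map \<tau> w)"
  have n0: "0 < n" using w by (simp add: n_def)
  have xX: "x \<in> X" unfolding x_def by (rule subshift_shift[OF X w(2)])
  have xper: "shiftZ (int n) x = x"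
  proof -
    have "shiftZ (int n) x = shiftZ (-1) (shiftZ (int n) (periodicZ w))"
      unfolding x_def by (simp only: shiftZ_shiftZ add.commute)
    then show ?thesis using periodicZ_period[OF w(1)] by (simp add: n_def x_def)
  qed
  have xw: "x (int i + 1) = w ! i" if "i < n" for i
    using that by (simp add: x_def periodicZ_def n_def)
  have wx: "w = map (\<lambda>k. x (int k)) [1..<Suc n]"
    by (rule map_upt_shift_eq) (simp_all add: n_def xw)
  have Wx: "W = concat (map (\<lambda>k. \<tau> (x (int k))) [1..<Suc n])"
    unfolding W_def by (subst wx) (simp del: upt_Suc add: comp_def)
  have WL: "int (length W) = cumlen \<tau> x (int n)"
    unfolding Wx by (rule cumlen_len_concat[OF ne])
  have Wpre: "morphZ \<tau> x (int i + 1) = W ! i" if "i < length W" for i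
    using that unfolding Wx by (rule morphZ_prefix[OF ne])
  have Lper: "shiftZ (int (length W)) (morphZ \<tau> x) = morphZ \<tau> x"
    using morphZ_shift[OF ne, of "int n" x] xper WL by simp
  have Wne: "W \<noteq> []"
  proof -
    have "cumlen \<tau> x 0 < cumlen \<tau> x (int n)" using n0 cumlen_less[OF ne, where m=0 and n="int n" and x=x] by simp
    then show ?thesis using WL by auto
  qed
  have W': "W = concat (replicate m v)" using vm W_def by simp
  note v = pp_props[OF W' vm(1) Wne]
  have vper: "shiftZ (int (length v)) (morphZ \<tau> x) = morphZ \<tau> x"
  proof (rule per_from_rep[OF _ Lper Wpre])
    show "0 < length W" using Wne by simp
    show "0 < length v" "length v dvd length W" using v by auto
    show "W ! i = W ! (i mod length v)" if "i < length W" for i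
    proof -
      have "i mod length v < length W" using v(1,2) by (meson less_trans mod_less_divisor)
      then show ?thesis using v(4)[OF that] v(4)[of "i mod length v"] by simp
    qed
  qed simp
  obtain j k where jk: "0 \<le> k" "k < int (length (\<tau> (x (j + 1))))" "int (length v) = cumlen \<tau> x j + k"
    using normalize by blast
  have e: "shiftZ k (morphZ \<tau> (shiftZ j x)) = shiftZ 0 (morphZ \<tau> x)"
    using vper jk(3) shift_morph by simp
  have xj: "shiftZ j x \<in> X" using subshift_shift[OF X xX] .
  have "shiftZ j x = x \<and> k = 0"
    by (rule recD[OF r xj xX]) (use jk len_pos[OF ne, of "x 1"] e in \<open>simp_all add: add.commute\<close>)
  then have jper: "shiftZ j x = x" and cj: "cumlen \<tau> x j = int (length v)" using jk by auto
  have j0: "0 < j"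
  proof (rule ccontr)
    assume "\<not> 0 < j"
    then have "cumlen \<tau> x j \<le> cumlen \<tau> x 0" using cumlen_le_iff[OF ne, where m=j and n=0 and x=x] by simp
    then show False using cj v(1) by simp
  qed
  have jn: "j < int n"
  proof (rule ccontr)
    assume "\<not> j < int n"
    then have "cumlen \<tau> x (int n) \<le> cumlen \<tau> x j" by (simp add: cumlen_le_iff[OF ne])
    then show False using cj v(2) WL by simp
  qed
  define d where "d = gcd j (int n)"
  have dper: "shiftZ d x = x" unfolding d_def by (rule per_gcd[OF jper xper])
  have d0: "0 < d" using j0 by (simp add: d_def)
  have dj: "d \<le> j" using j0 by (simp add: d_def zdvd_imp_le)
  have ddvd: "d dvd int n" by (simp add: d_def)
  have pper: "shiftZ d (periodicZ w) = periodicZ w"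
  proof -
    have "periodicZ w = shiftZ 1 x" by (simp add: x_def)
    moreover have "shiftZ d (shiftZ 1 x) = shiftZ 1 (shiftZ d x)" by (simp add: add.commute)
    ultimately show ?thesis using dper by simp
  qed
  show "proper_power w"
  proof (rule pp_of_period[where d="nat d"])
    show "0 < nat d" using d0 by simp
    show "nat d < length w" using dj jn n_def d0 by linarith
    have "int (nat d) dvd int n" using ddvd d0 by simp
    then show "nat d dvd length w" using n_def by (simp only: of_nat_dvd_iff)
    fix i assume i: "i < length w"
    have pw: "periodicZ w (int a) = w ! a" if "a < length w" for a
      using that by (simp add: periodicZ_def)
    have "w ! i = periodicZ w (int i)" using pw[OF i] by simp
    also have "\<dots> = periodicZ w (int i mod d)" by (rule per_mod[OF pper])
    also have "int i mod d = int (i mod nat d)" using d0 by (simp add: zmod_int)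
    also have "periodicZ w (int (i mod nat d)) = w ! (i mod nat d)"
      by (rule pw) (use i in \<open>meson le_less_trans mod_less_eq_dividend\<close>)
    finally show "w ! i = w ! (i mod nat d)" .
  qed
qed

end


context
  fixes \<tau> :: "'a \<Rightarrow> 'b list"
  assumes ne: "non_erasing \<tau>"
begin

lemma oi_pp_imp_rec:
  assumes X: "subshift X" and oi: "orbit_injective \<tau> X" and pp: "period_preserving \<tau> X"
    and PT: "\<And>x p. x \<in> X \<Longrightarrow> p \<noteq> 0 \<Longrightarrow> shiftZ p (morphZ \<tau> x) = morphZ \<tau> x \<Longrightarrow> \<exists>q>0. shiftZ q x = x"
  shows "recognizable \<tau> X"
  unfolding recognizable_def
proof (intro ballI allI impI)
  fix x x' k l y
  assume x: "x \<in> X" and x': "x' \<in> X" and H: "0 \<le> k \<and> k \<le> int (length (\<tau> (x 1))) - 1 \<and>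
    0 \<le> l \<and> l \<le> int (length (\<tau> (x' 1))) - 1 \<and>
    y = shiftZ k (morphZ \<tau> x) \<and> y = shiftZ l (morphZ \<tau> x')"
  then have k: "0 \<le> k" "k < int (length (\<tau> (x 1)))" and l: "0 \<le> l" "l < int (length (\<tau> (x' 1)))"
    and eq: "shiftZ k (morphZ \<tau> x) = shiftZ l (morphZ \<tau> x')" by auto
  have "shiftZ (-l) (shiftZ k (morphZ \<tau> x)) = shiftZ (-l) (shiftZ l (morphZ \<tau> x'))" using eq by simp
  then have "morphZ \<tau> x' = shiftZ (k - l) (morphZ \<tau> x)" by (simp only: shiftZ_shiftZ) simp
  then have "same_orbit (morphZ \<tau> x) (morphZ \<tau> x')" by (auto simp: same_orbit_def)
  then have "same_orbit x x'" using oi x x' by (auto simp: orbit_injective_def)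
  then obtain j where j: "x' = shiftZ j x" by (auto simp: same_orbit_def)
  have eq2: "shiftZ k (morphZ \<tau> x) = shiftZ (l + cumlen \<tau> x j) (morphZ \<tau> x)"
    using eq unfolding j morphZ_shift[OF ne] by (simp only: shiftZ_shiftZ)
  have fin: "x = x' \<and> k = l" if "x' = shiftZ j' x" "k = l + cumlen \<tau> x j'" for j'
  proof -
    have "l < int (length (\<tau> (x (j' + 1))))" using l that(1) by (simp add: add.commute)
    then have "j' = 0" using zero_case[OF ne k l(1) _ that(2)] by blast
    then show ?thesis using that by simp
  qed
  show "x = x' \<and> k = l"
  proof (cases "k = l + cumlen \<tau> x j")
    case True then show ?thesis using fin[OF j True] by auto
  next
    case False
    define p where "p = l + cumlen \<tau> x j - k"
    have p0: "p \<noteq> 0" using False p_def by simp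
    have pper: "shiftZ p (morphZ \<tau> x) = morphZ \<tau> x"
    proof -
      have "shiftZ (-k) (shiftZ k (morphZ \<tau> x)) = shiftZ (-k) (shiftZ (l + cumlen \<tau> x j) (morphZ \<tau> x))"
        using eq2 by simp
      then show ?thesis by (simp only: shiftZ_shiftZ) (simp add: p_def)
    qed
    obtain q where q: "q > 0" "shiftZ q x = x" using PT[OF x p0 pper] by blast
    have nex: "\<exists>n::nat. 0 < n \<and> shiftZ (int n) x = x"
      using q by (intro exI[of _ "nat q"]) simp
    define n where "n = (LEAST n::nat. 0 < n \<and> shiftZ (int n) x = x)"
    have n: "0 < n" "shiftZ (int n) x = x" using LeastI_ex[OF nex] unfolding n_def by auto
    have nmin: "shiftZ (int e) x \<noteq> x" if "0 < e" "e < n" for e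
      using not_less_Least[of e "\<lambda>n. 0 < n \<and> shiftZ (int n) x = x"] that unfolding n_def by blast
    define w where "w = map (\<lambda>k. x (int k)) [1..<Suc n]"
    have lw: "length w = n" by (simp add: w_def del: upt_Suc)
    have xw: "x (int i + 1) = w ! i" if "i < n" for i
      using that by (simp add: w_def del: upt_Suc add: add.commute)
    have pw: "periodicZ w = shiftZ 1 x" unfolding w_def by (rule periodicZ_of_periodic[OF n])
    have wX: "periodicZ w \<in> X" unfolding pw by (rule subshift_shift[OF X x])
    have wne: "w \<noteq> []" using lw n(1) by auto
    have wnpp: "\<not> proper_power w"
    proof
      assume "proper_power w"
      then obtain u m where um: "2 \<le> m" "w = concat (replicate m u)" by (auto simp: proper_power_def)
      note u = pp_props[OF um(2) um(1) wne]
      have "shiftZ (int (length u)) x = x"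
      proof (rule per_from_rep[OF n(1) n(2)])
        show "x (int i + 1) = w ! i" if "i < n" for i using xw[OF that] .
        show "0 < length u" "length u dvd n" using u lw by auto
        show "w ! i = w ! (i mod length u)" if "i < n" for i
        proof -
          have "i mod length u < length w" using u(1,2) by (meson less_trans mod_less_divisor)
          then show ?thesis using u(4)[of i] u(4)[of "i mod length u"] that lw by simp
        qed
      qed
      then show False using nmin[of "length u"] u lw by simp
    qed
    then have Wnpp: "\<not> proper_power (concat (map \<tau> w))"
      using pp wne wX unfolding period_preserving_def by blast
    define W where "W = concat (map \<tau> w)"
    have Wx: "W = concat (map (\<lambda>k. \<tau> (x (int k))) [1..<Suc n])"
      by (simp add: W_def w_def comp_def del: upt_Suc)
    have WL: "int (length W) = cumlen \<tau> x (int n)"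
      unfolding Wx by (rule cumlen_len_concat[OF ne])
    have Wpre: "morphZ \<tau> x (int i + 1) = W ! i" if "i < length W" for i
      using that unfolding Wx by (rule morphZ_prefix[OF ne])
    have Lper: "shiftZ (int (length W)) (morphZ \<tau> x) = morphZ \<tau> x"
      using morphZ_shift[OF ne, of "int n" x] n(2) WL by simp
    have L0: "0 < length W"
    proof -
      have "cumlen \<tau> x 0 < cumlen \<tau> x (int n)" using n(1) cumlen_less[OF ne, where m=0 and n="int n" and x=x] by simp
      then show ?thesis using WL cumlen_0[of \<tau> x] by linarith
    qed
    define d where "d = gcd p (int (length W))"
    have dper: "shiftZ d (morphZ \<tau> x) = morphZ \<tau> x" unfolding d_def by (rule per_gcd[OF pper Lper])
    have d0: "0 < d" using L0 by (simp add: d_def)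
    have ddvd: "d dvd int (length W)" by (simp add: d_def)
    have dL: "d = int (length W)"
    proof (rule ccontr)
      assume "d \<noteq> int (length W)"
      then have dlt: "d < int (length W)" using zdvd_imp_le[OF ddvd] L0 by simp
      have "proper_power W"
      proof (rule pp_of_period[where d="nat d"])
        show "0 < nat d" using d0 by simp
        show "nat d < length W" using dlt d0 by linarith
        have "int (nat d) dvd int (length W)" using ddvd d0 by simp
        then show "nat d dvd length W" by (simp only: of_nat_dvd_iff)
        fix i assume i: "i < length W"
        have g: "shiftZ d (shiftZ 1 (morphZ \<tau> x)) = shiftZ 1 (morphZ \<tau> x)"
          using dper by (metis add.commute shiftZ_shiftZ)
        have im: "i mod nat d < length W" using i by (meson le_less_trans mod_less_eq_dividend)
        have "W ! i = shiftZ 1 (morphZ \<tau> x) (int i)" using Wpre[OF i] by simp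
        also have "\<dots> = shiftZ 1 (morphZ \<tau> x) (int i mod d)" by (rule per_mod[OF g])
        also have "int i mod d = int (i mod nat d)" using d0 by (simp add: zmod_int)
        also have "shiftZ 1 (morphZ \<tau> x) (int (i mod nat d)) = W ! (i mod nat d)"
          using Wpre[OF im] by simp
        finally show "W ! i = W ! (i mod nat d)" .
      qed
      then show False using Wnpp W_def by simp
    qed
    have "d dvd p" by (simp add: d_def)
    then obtain t where t: "p = t * int (length W)" using dL by (metis dvd_def mult.commute)
    define j' where "j' = j - t * int n"
    have xt: "shiftZ ((- t) * int n) x = x" by (rule per_mult[OF n(2)])
    have j'x: "x' = shiftZ j' x"
    proof -
      have "shiftZ j' x = shiftZ j (shiftZ ((- t) * int n) x)" by (simp only: shiftZ_shiftZ j'_def) simp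
      then show ?thesis using xt j by (simp only:)
    qed
    have cj': "cumlen \<tau> x j' = cumlen \<tau> x j - p"
    proof -
      have "cumlen \<tau> x (j + (- t) * int n) = cumlen \<tau> x j + cumlen \<tau> x ((- t) * int n)"
        by (rule cumlen_period[OF xt])
      moreover have "cumlen \<tau> x ((- t) * int n) = (- t) * cumlen \<tau> x (int n)"
        by (rule cumlen_period_mult[OF n(2)])
      ultimately show ?thesis using t WL by (simp add: j'_def)
    qed
    have "k = l + cumlen \<tau> x j'" using cj' p_def by simp
    then show ?thesis using fin[OF j'x] by blast
  qed
qed

end


lemma topspace_fullshift[simp]: "topspace fullshift_top = UNIV"
  by (simp add: fullshift_top_def)

lemma Hausdorff_fullshift: "Hausdorff_space fullshift_top"
  unfolding fullshift_top_def by (simp add: Hausdorff_space_product_topology)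

lemma cylinder_open:
  assumes "finite W"
  shows "openin fullshift_top {z. \<forall>i\<in>W. z i = x i}"
proof -
  define S where "S = (\<lambda>i. if i \<in> W then {x i} else UNIV)"
  have e: "{z. \<forall>i\<in>W. z i = x i} = PiE UNIV S"
    by (auto simp: S_def PiE_UNIV_domain Pi_def split: if_splits)
  have "finite {i \<in> UNIV. S i \<noteq> topspace (discrete_topology UNIV)}"
    by (rule finite_subset[OF _ assms]) (auto simp: S_def)
  then show ?thesis unfolding e fullshift_top_def by (simp add: openin_PiE_gen)
qed

lemma continuous_local:
  assumes "\<And>i. \<exists>N. \<forall>x y. (\<forall>j. \<bar>j\<bar> \<le> N \<longrightarrow> x j = y j) \<longrightarrow> f x i = f y i"
  shows "continuous_map fullshift_top fullshift_top f"
  unfolding fullshift_top_def continuous_map_componentwise_UNIV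
proof
  fix k
  obtain N where N: "\<And>x y. (\<forall>j. \<bar>j\<bar> \<le> N \<longrightarrow> x j = y j) \<Longrightarrow> f x k = f y k" using assms by blast
  show "continuous_map (product_topology (\<lambda>_. discrete_topology UNIV) UNIV) (discrete_topology UNIV) (\<lambda>x. f x k)"
    unfolding continuous_map
  proof (intro conjI allI impI)
    fix U :: "'b set"
    show "openin (product_topology (\<lambda>_. discrete_topology UNIV) UNIV) {x \<in> topspace (product_topology (\<lambda>_. discrete_topology UNIV) UNIV). f x k \<in> U}"
    proof (subst openin_subopen, intro ballI)
      fix x assume x: "x \<in> {x \<in> topspace (product_topology (\<lambda>_. discrete_topology UNIV) UNIV). f x k \<in> U}"
      define C where "C = {z. \<forall>i\<in>{-N..N}. z i = x i}"
      have "openin fullshift_top C" unfolding C_def by (rule cylinder_open) simp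
      moreover have "x \<in> C" by (simp add: C_def)
      moreover have "C \<subseteq> {x \<in> topspace (product_topology (\<lambda>_. discrete_topology UNIV) UNIV). f x k \<in> U}"
      proof
        fix z assume "z \<in> C"
        have "\<forall>j. \<bar>j\<bar> \<le> N \<longrightarrow> z j = x j"
        proof (intro allI impI)
          fix j assume "\<bar>j\<bar> \<le> N"
          then have "j \<in> {-N..N}" by (simp add: abs_le_iff)
          then show "z j = x j" using \<open>z \<in> C\<close> by (simp add: C_def)
        qed
        then have "f z k = f x k" by (rule N)
        then show "z \<in> {x \<in> topspace (product_topology (\<lambda>_. discrete_topology UNIV) UNIV). f x k \<in> U}"
          using x by simp
      qed
      ultimately show "\<exists>T. openin (product_topology (\<lambda>_. discrete_topology UNIV) UNIV) T \<and> x \<in> T \<and>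
          T \<subseteq> {x \<in> topspace (product_topology (\<lambda>_. discrete_topology UNIV) UNIV). f x k \<in> U}"
        unfolding fullshift_top_def by blast
    qed
  qed simp
qed

lemma continuous_morphZ:
  assumes ne: "non_erasing \<tau>"
  shows "continuous_map fullshift_top fullshift_top (morphZ \<tau>)"
proof (rule continuous_local)
  fix i
  show "\<exists>N. \<forall>x y. (\<forall>j. \<bar>j\<bar> \<le> N \<longrightarrow> x j = y j) \<longrightarrow> morphZ \<tau> x i = morphZ \<tau> y i"
    by (intro exI[of _ "\<bar>i\<bar> + 2"] allI impI morphZ_local[OF ne]) blast
qed

lemma continuous_shiftZ: "continuous_map fullshift_top fullshift_top (shiftZ k)"
proof (rule continuous_local)
  fix i
  show "\<exists>N. \<forall>x y. (\<forall>j. \<bar>j\<bar> \<le> N \<longrightarrow> x j = y j) \<longrightarrow> shiftZ k x i = shiftZ k y i"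
  proof (intro exI[of _ "\<bar>i + k\<bar>"] allI impI)
    fix x y assume "\<forall>j. \<bar>j\<bar> \<le> \<bar>i + k\<bar> \<longrightarrow> x j = y j"
    then show "shiftZ k x i = shiftZ k y i" by simp
  qed
qed

lemma compact_fullshift: "compact_space (fullshift_top :: (int \<Rightarrow> 'a::finite) topology)"
  unfolding fullshift_top_def
  by (simp add: compact_space_product_topology compact_space_discrete_topology)

lemma compactin_finite_letters:
  assumes "finite F" "closedin fullshift_top X" "\<And>x i. x \<in> X \<Longrightarrow> x i \<in> F"
  shows "compactin fullshift_top X"
proof (rule closed_compactin[OF _ _ assms(2)])
  show "compactin fullshift_top (PiE UNIV (\<lambda>_. F))"
    unfolding fullshift_top_def using assms(1) by (simp add: compactin_PiE compactin_discrete_topology)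
  show "X \<subseteq> PiE UNIV (\<lambda>_. F)" using assms(3) by (auto simp: PiE_UNIV_domain)
qed

lemma subshift_UNIV: "subshift UNIV"
proof -
  have "shiftZ 1 ` UNIV = (UNIV :: (int \<Rightarrow> 'a) set)"
  proof (rule surjI)
    fix x :: "int \<Rightarrow> 'a" show "shiftZ 1 (shiftZ (-1) x) = x" by simp
  qed
  then show ?thesis unfolding subshift_def using closedin_topspace[of fullshift_top] by simp
qed

lemma subshiftI:
  assumes "Y \<noteq> {}" "closedin fullshift_top Y" "\<And>y. y \<in> Y \<Longrightarrow> shiftZ 1 y \<in> Y"
    "\<And>y. y \<in> Y \<Longrightarrow> shiftZ (-1) y \<in> Y"
  shows "subshift Y"
proof -
  have "shiftZ 1 ` Y = Y"
  proof
    show "shiftZ 1 ` Y \<subseteq> Y" using assms(3) by blast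
    show "Y \<subseteq> shiftZ 1 ` Y"
    proof
      fix y assume "y \<in> Y"
      then have "shiftZ 1 (shiftZ (-1) y) \<in> shiftZ 1 ` Y" using assms(4) by blast
      then show "y \<in> shiftZ 1 ` Y" by simp
    qed
  qed
  then show ?thesis using assms unfolding subshift_def by blast
qed

context
  fixes \<tau> :: "'a \<Rightarrow> 'b list" and X :: "(int \<Rightarrow> 'a) set"
  assumes Xne: "X \<noteq> {}"
begin

lemma image_subshift_contains: "morphZ \<tau> ` X \<subseteq> image_subshift \<tau> X"
  unfolding image_subshift_def by blast

lemma image_subshift_minimal: "subshift Y \<Longrightarrow> morphZ \<tau> ` X \<subseteq> Y \<Longrightarrow> image_subshift \<tau> X \<subseteq> Y"
  unfolding image_subshift_def by blast

lemma image_subshift_subshift: "subshift (image_subshift \<tau> X)"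
proof (rule subshiftI)
  show "image_subshift \<tau> X \<noteq> {}" using image_subshift_contains Xne by blast
  have Fne: "{Y. subshift Y \<and> morphZ \<tau> ` X \<subseteq> Y} \<noteq> {}" using subshift_UNIV by blast
  show "closedin fullshift_top (image_subshift \<tau> X)"
    unfolding image_subshift_def by (rule closedin_Inter[OF Fne]) (auto simp: subshift_def)
  show "shiftZ 1 y \<in> image_subshift \<tau> X" if "y \<in> image_subshift \<tau> X" for y
    using that subshift_shift unfolding image_subshift_def by blast
  show "shiftZ (-1) y \<in> image_subshift \<tau> X" if "y \<in> image_subshift \<tau> X" for y
    using that subshift_shift unfolding image_subshift_def by blast
qed

end


lemma shift_mod_period:
  assumes "0 < P" "shiftZ P f = f" shows "shiftZ a f = shiftZ (a mod P) f"
proof -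
  have "shiftZ a f = shiftZ (a mod P) (shiftZ ((a div P) * P) f)"
    by (simp only: shiftZ_shiftZ) (simp add: mod_div_mult_eq)
  then show ?thesis using per_mult[OF assms(2)] by simp
qed

lemma periodic_transfer:
  assumes ne: "non_erasing \<tau>" and X: "subshift X" and cX: "compactin fullshift_top X"
    and oi: "orbit_injective \<tau> X" and x: "x \<in> X" and p0: "p \<noteq> 0"
    and pper: "shiftZ p (morphZ \<tau> x) = morphZ \<tau> x"
  shows "\<exists>q>0. shiftZ q x = x"
proof (rule ccontr)
  assume np: "\<not> (\<exists>q>0. shiftZ q x = x)"
  have inj: "a = b" if e: "shiftZ a x = shiftZ b x" for a b
  proof (rule ccontr)
    assume ab: "a \<noteq> b"
    have "shiftZ (-b) (shiftZ a x) = shiftZ (-b) (shiftZ b x)" using e by simp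
    then have 1: "shiftZ (a - b) x = x" by (simp only: shiftZ_shiftZ) simp
    have "shiftZ (-a) (shiftZ a x) = shiftZ (-a) (shiftZ b x)" using e by simp
    then have 2: "shiftZ (b - a) x = x" by (simp only: shiftZ_shiftZ) simp
    show False using np 1 2 ab by (cases "a < b") auto
  qed
  define Orb where "Orb = range (\<lambda>m. shiftZ m x)"
  have OX: "Orb \<subseteq> X" using subshift_shift[OF X x] by (auto simp: Orb_def)
  have clX: "closedin fullshift_top X" using X by (simp add: subshift_def)
  define P where "P = \<bar>p\<bar>"
  have P0: "0 < P" using p0 by (simp add: P_def)
  have Pper: "shiftZ P (morphZ \<tau> x) = morphZ \<tau> x"
  proof (cases "0 \<le> p")
    case True then show ?thesis using pper by (simp add: P_def)
  next
    case False
    have "shiftZ (-p) (shiftZ p (morphZ \<tau> x)) = shiftZ (-p) (morphZ \<tau> x)" using pper by simp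
    then show ?thesis using False by (simp only: shiftZ_shiftZ) (simp add: P_def)
  qed
  define Q where "Q = (\<lambda>r. shiftZ r (morphZ \<tau> x)) ` {0..<P}"
  have Qfin: "finite Q" by (simp add: Q_def)
  have OQ: "morphZ \<tau> ` Orb \<subseteq> Q"
  proof
    fix z assume "z \<in> morphZ \<tau> ` Orb"
    then obtain m where "z = morphZ \<tau> (shiftZ m x)" by (auto simp: Orb_def)
    then have "z = shiftZ (cumlen \<tau> x m) (morphZ \<tau> x)" by (simp add: morphZ_shift[OF ne])
    also have "\<dots> = shiftZ (cumlen \<tau> x m mod P) (morphZ \<tau> x)" by (rule shift_mod_period[OF P0 Pper])
    finally show "z \<in> Q" using P0 by (auto simp: Q_def)
  qed
  have t1: "t1_space (fullshift_top :: (int \<Rightarrow> 'b) topology)"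
    by (rule Hausdorff_imp_t1_space[OF Hausdorff_fullshift])
  have Qcl: "closedin fullshift_top Q"
    using t1 Qfin by (simp add: t1_space_closedin_finite)
  have Ocl: "closedin fullshift_top Orb"
  proof -
    have "fullshift_top closure_of Orb \<subseteq> Orb"
    proof
      fix z assume z: "z \<in> fullshift_top closure_of Orb"
      have zX: "z \<in> X" using closure_of_minimal[OF OX clX] z by blast
      have "morphZ \<tau> z \<in> fullshift_top closure_of (morphZ \<tau> ` Orb)"
        using continuous_map_image_closure_subset[OF continuous_morphZ[OF ne]] z by blast
      also have "\<dots> \<subseteq> Q" by (rule closure_of_minimal[OF OQ Qcl])
      finally obtain r where "morphZ \<tau> z = shiftZ r (morphZ \<tau> x)" by (auto simp: Q_def)
      then have "same_orbit (morphZ \<tau> x) (morphZ \<tau> z)" by (auto simp: same_orbit_def)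
      then have "same_orbit x z" using oi x zX by (auto simp: orbit_injective_def)
      then show "z \<in> Orb" by (auto simp: same_orbit_def Orb_def)
    qed
    then show ?thesis using closure_of_subset_eq[of Orb fullshift_top] by simp
  qed
  have cO: "compactin fullshift_top Orb" by (rule closed_compactin[OF cX OX Ocl])
  define T where "T = subtopology fullshift_top Orb"
  have tsT: "topspace T = Orb" by (simp add: T_def)
  have cT: "compact_space T" unfolding T_def by (rule compact_space_subtopology[OF cO])
  have hT: "Hausdorff_space T" unfolding T_def by (rule Hausdorff_space_subtopology[OF Hausdorff_fullshift])
  have lT: "locally_compact_space T \<and> regular_space T"
    using cT hT compact_imp_locally_compact_space compact_Hausdorff_imp_regular_space by blast
  have "\<exists>m. openin T {shiftZ m x}"
  proof (rule ccontr)
    assume no: "\<not> (\<exists>m. openin T {shiftZ m x})"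
    have "T interior_of \<Union> ((\<lambda>m. {shiftZ m x}) ` UNIV) = {}"
    proof (rule Baire_category_alt)
      show "completely_metrizable_space T \<or> locally_compact_space T \<and> regular_space T" using lT by blast
      show "countable ((\<lambda>m. {shiftZ m x}) ` (UNIV :: int set))" by simp
      fix S assume "S \<in> (\<lambda>m. {shiftZ m x}) ` (UNIV :: int set)"
      then obtain m where S: "S = {shiftZ m x}" by blast
      have mT: "shiftZ m x \<in> topspace T" by (simp add: tsT Orb_def)
      show "closedin T S \<and> T interior_of S = {}"
      proof
        show "closedin T S" unfolding S by (rule closedin_t1_singleton[OF Hausdorff_imp_t1_space[OF hT] mT])
        show "T interior_of S = {}"
        proof (rule ccontr)
          assume "T interior_of S \<noteq> {}"
          then have "T interior_of S = S" using interior_of_subset[of T S] S by blast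
          then have "openin T S" by (simp add: interior_of_eq)
          then show False using no S by blast
        qed
      qed
    qed
    moreover have "\<Union> ((\<lambda>m. {shiftZ m x}) ` UNIV) = topspace T" by (auto simp: tsT Orb_def)
    moreover have "x \<in> topspace T" using tsT Orb_def by (metis rangeI shiftZ_0)
    ultimately show False by simp
  qed
  then obtain m where "openin T {shiftZ m x}" by blast
  then obtain U where U: "openin fullshift_top U" "{shiftZ m x} = U \<inter> Orb"
    by (auto simp: T_def openin_subtopology)
  have iso: "\<exists>V. openin fullshift_top V \<and> V \<inter> Orb = {shiftZ a x}" for a
  proof -
    define V where "V = {z \<in> topspace fullshift_top. shiftZ (m - a) z \<in> U}"
    have Vo: "openin fullshift_top V"
      unfolding V_def by (rule openin_continuous_map_preimage[OF continuous_shiftZ U(1)])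
    have "V \<inter> Orb = {shiftZ a x}"
    proof
      show "V \<inter> Orb \<subseteq> {shiftZ a x}"
      proof
        fix z assume z: "z \<in> V \<inter> Orb"
        then obtain b where b: "z = shiftZ b x" by (auto simp: Orb_def)
        have "shiftZ (m - a + b) x \<in> U" using z b by (simp add: V_def)
        moreover have "shiftZ (m - a + b) x \<in> Orb" by (simp add: Orb_def)
        ultimately have "shiftZ (m - a + b) x = shiftZ m x" using U(2) by blast
        then have "m - a + b = m" by (rule inj)
        then show "z \<in> {shiftZ a x}" using b by simp
      qed
      show "{shiftZ a x} \<subseteq> V \<inter> Orb"
        using U(2) by (auto simp: V_def Orb_def)
    qed
    then show ?thesis using Vo by blast
  qed
  then obtain V where V: "\<And>a. openin fullshift_top (V a)" "\<And>a. V a \<inter> Orb = {shiftZ a x}" by metis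
  have "Orb \<subseteq> \<Union> (range V)" using V(2) by (auto simp: Orb_def)
  then obtain F where F: "finite F" "F \<subseteq> range V" "Orb \<subseteq> \<Union>F"
    using cO V(1) unfolding compactin_def by (metis rangeE)
  have "Orb \<subseteq> \<Union> ((\<lambda>S. S \<inter> Orb) ` F)" using F(3) by blast
  moreover have "finite (\<Union> ((\<lambda>S. S \<inter> Orb) ` F))"
  proof (rule finite_Union)
    show "finite ((\<lambda>S. S \<inter> Orb) ` F)" using F(1) by simp
    show "finite M" if "M \<in> (\<lambda>S. S \<inter> Orb) ` F" for M
      using that F(2) V(2) by auto
  qed
  ultimately have "finite Orb" by (rule finite_subset)
  moreover have "inj (\<lambda>m. shiftZ m x)" by (rule injI) (rule inj)
  ultimately show False unfolding Orb_def using finite_imageD infinite_UNIV_int by blast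
qed


theorem rec_iff_oi_pp:
  assumes ne: "non_erasing \<tau>" and X: "subshift X" and cX: "compactin fullshift_top X"
  shows "recognizable \<tau> X \<longleftrightarrow> orbit_injective \<tau> X \<and> period_preserving \<tau> X"
proof
  assume "recognizable \<tau> X"
  then show "orbit_injective \<tau> X \<and> period_preserving \<tau> X"
    using rec_imp_oi[OF ne X] rec_imp_pp[OF ne X] by blast
next
  assume H: "orbit_injective \<tau> X \<and> period_preserving \<tau> X"
  show "recognizable \<tau> X"
  proof (rule oi_pp_imp_rec[OF ne X])
    show "orbit_injective \<tau> X" "period_preserving \<tau> X" using H by auto
    show "\<exists>q>0. shiftZ q x = x" if "x \<in> X" "p \<noteq> 0" "shiftZ p (morphZ \<tau> x) = morphZ \<tau> x" for x p
      by (rule periodic_transfer[OF ne X cX]) (use H that in auto)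
  qed
qed

lemma letter_rec_iff:
  assumes len: "\<And>a. length (\<rho> a) = 1"
  shows "recognizable \<rho> Z \<longleftrightarrow> inj_on (morphZ \<rho>) Z"
proof
  assume r: "recognizable \<rho> Z"
  show "inj_on (morphZ \<rho>) Z"
  proof (rule inj_onI)
    fix z z' assume "z \<in> Z" "z' \<in> Z" "morphZ \<rho> z = morphZ \<rho> z'"
    then show "z = z'" using r len unfolding recognizable_def by force
  qed
next
  assume i: "inj_on (morphZ \<rho>) Z"
  show "recognizable \<rho> Z"
    unfolding recognizable_def
  proof (intro ballI allI impI)
    fix x x' k l y
    assume x: "x \<in> Z" "x' \<in> Z" and H: "0 \<le> k \<and> k \<le> int (length (\<rho> (x 1))) - 1 \<and>
      0 \<le> l \<and> l \<le> int (length (\<rho> (x' 1))) - 1 \<and> y = shiftZ k (morphZ \<rho> x) \<and> y = shiftZ l (morphZ \<rho> x')"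
    then have "k = 0" "l = 0" using len by auto
    moreover have "shiftZ k (morphZ \<rho> x) = shiftZ l (morphZ \<rho> x')" using H by auto
    ultimately have "morphZ \<rho> x = morphZ \<rho> x'" by simp
    then show "x = x' \<and> k = l" using i x \<open>k = 0\<close> \<open>l = 0\<close> by (auto dest: inj_onD)
  qed
qed

lemma alpha_shift: "morphZ (subdiv_letter \<sigma>) (shiftZ k z) = shiftZ k (morphZ (subdiv_letter \<sigma>) z)"
  by (rule ext) (simp add: morphZ_subdiv_letter)

lemma pi_inj:
  assumes ne: "non_erasing \<sigma>" and e: "morphZ (subdiv \<sigma>) x = morphZ (subdiv \<sigma>) x'"
  shows "x = x'"
proof -
  have step: "x n = x' n \<and> cumlen \<sigma> x n = cumlen \<sigma> x' n" if c: "cumlen \<sigma> x (n - 1) = cumlen \<sigma> x' (n - 1)" for n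
  proof -
    let ?i = "cumlen \<sigma> x (n - 1) + 1"
    have l1: "0 < int (length (\<sigma> (x n)))" "0 < int (length (\<sigma> (x' n)))"
      using len_pos[OF ne] by simp_all
    have b: "cumlen \<sigma> x (n - 1) < ?i" "?i \<le> cumlen \<sigma> x n"
      using cumlen_rec[of \<sigma> x n] l1 by linarith+
    have b': "cumlen \<sigma> x' (n - 1) < ?i" "?i \<le> cumlen \<sigma> x' n"
      using cumlen_rec[of \<sigma> x' n] l1 c by linarith+
    have "x n = x' n" using morphZ_subdiv[OF ne b] morphZ_subdiv[OF ne b'] e by simp
    then show ?thesis using cumlen_rec[of \<sigma> x n] cumlen_rec[of \<sigma> x' n] c by simp
  qed
  have down: "cumlen \<sigma> x (n - 1) = cumlen \<sigma> x' (n - 1)" if c: "cumlen \<sigma> x n = cumlen \<sigma> x' n" for n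
  proof -
    let ?i = "cumlen \<sigma> x n"
    have b: "cumlen \<sigma> x (n - 1) < ?i" "?i \<le> cumlen \<sigma> x n"
      using cumlen_step[OF ne, of x n] by auto
    have b': "cumlen \<sigma> x' (n - 1) < ?i" "?i \<le> cumlen \<sigma> x' n"
      using cumlen_step[OF ne, of x' n] c by auto
    have "(x n, nat (?i - cumlen \<sigma> x (n - 1))) = (x' n, nat (?i - cumlen \<sigma> x' (n - 1)))"
      using morphZ_subdiv[OF ne b] morphZ_subdiv[OF ne b'] e by simp
    then have "x n = x' n" "nat (?i - cumlen \<sigma> x (n - 1)) = nat (?i - cumlen \<sigma> x' (n - 1))" by auto
    then show ?thesis using b b' by simp
  qed
  have all: "cumlen \<sigma> x n = cumlen \<sigma> x' n" for n
  proof (induct n rule: int_induct[where k=0])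
    case base then show ?case by simp
  next
    case (step1 i) then show ?case using step[of "i + 1"] by simp
  next
    case (step2 i) then show ?case using down[of i] by simp
  qed
  show ?thesis
  proof
    fix n show "x n = x' n" using step[of n] all[of "n - 1"] by simp
  qed
qed

lemma pi_at_1:
  assumes ne: "non_erasing \<sigma>" and k: "0 \<le> k" "k < int (length (\<sigma> (x 1)))"
  shows "shiftZ k (morphZ (subdiv \<sigma>) x) 1 = (x 1, nat (k + 1))"
proof -
  have b: "cumlen \<sigma> x (1 - 1) < 1 + k" "1 + k \<le> cumlen \<sigma> x 1"
    using k cumlen_rec[of \<sigma> x 1] by auto
  show ?thesis using morphZ_subdiv[OF ne b] by (simp add: add.commute)
qed


definition Sset :: "('a \<Rightarrow> 'b list) \<Rightarrow> (int \<Rightarrow> 'a) set \<Rightarrow> (int \<Rightarrow> 'a \<times> nat) set" where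
  "Sset \<sigma> X = {z. \<exists>x k. x \<in> X \<and> 0 \<le> k \<and> k < int (length (\<sigma> (x 1))) \<and> z = shiftZ k (morphZ (subdiv \<sigma>) x)}"

context
  fixes \<sigma> :: "'a::finite \<Rightarrow> 'b::finite list" and X :: "(int \<Rightarrow> 'a) set"
  assumes ne: "non_erasing \<sigma>" and X: "subshift X"
begin

lemma Xne: "X \<noteq> {}" using X by (simp add: subshift_def)

lemma cX: "compactin fullshift_top X"
proof -
  have c: "compact_space (fullshift_top :: (int \<Rightarrow> 'a) topology)" by (rule compact_fullshift)
  show ?thesis using X closedin_compact_space[OF c] by (simp add: subshift_def)
qed

lemma S_orbit:
  assumes x: "x \<in> X" shows "shiftZ m (morphZ (subdiv \<sigma>) x) \<in> Sset \<sigma> X"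
proof -
  obtain j k where jk: "0 \<le> k" "k < int (length (subdiv \<sigma> (x (j + 1))))" "m = cumlen (subdiv \<sigma>) x j + k"
    using normalize[OF ne_subdiv[OF ne]] by blast
  have e: "shiftZ m (morphZ (subdiv \<sigma>) x) = shiftZ k (morphZ (subdiv \<sigma>) (shiftZ j x))"
    unfolding jk(3) by (rule shift_morph[OF ne_subdiv[OF ne]])
  have xj: "shiftZ j x \<in> X" by (rule subshift_shift[OF X x])
  have kk: "k < int (length (\<sigma> (shiftZ j x 1)))" using jk(2) by (simp add: subdiv_len add.commute)
  show ?thesis unfolding Sset_def e mem_Collect_eq
    by (rule exI[of _ "shiftZ j x"], rule exI[of _ k]) (use xj jk(1) kk in blast)
qed

lemma S_closed: "closedin fullshift_top (Sset \<sigma> X)"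
proof -
  define piece where "piece = (\<lambda>(a, k). (\<lambda>x. shiftZ k (morphZ (subdiv \<sigma>) x)) ` {x \<in> X. x 1 = a})"
  define I where "I = (SIGMA a:(UNIV::'a set). {0..<int (length (\<sigma> a))})"
  have SI: "Sset \<sigma> X = \<Union> (piece ` I)"
  proof
    show "Sset \<sigma> X \<subseteq> \<Union> (piece ` I)"
    proof
      fix z assume "z \<in> Sset \<sigma> X"
      then obtain x k where xk: "x \<in> X" "0 \<le> k" "k < int (length (\<sigma> (x 1)))"
        "z = shiftZ k (morphZ (subdiv \<sigma>) x)" unfolding Sset_def mem_Collect_eq by blast
      have "(x 1, k) \<in> I" unfolding I_def using xk(2,3) by simp
      moreover have "z \<in> piece (x 1, k)" unfolding piece_def prod.case
        by (rule image_eqI[of _ _ x]) (use xk in simp_all)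
      ultimately show "z \<in> \<Union> (piece ` I)" by blast
    qed
    show "\<Union> (piece ` I) \<subseteq> Sset \<sigma> X"
    proof
      fix z assume "z \<in> \<Union> (piece ` I)"
      then obtain a k where ak: "(a, k) \<in> I" "z \<in> piece (a, k)" by auto
      then obtain x where x: "x \<in> X" "x 1 = a" "z = shiftZ k (morphZ (subdiv \<sigma>) x)"
        unfolding piece_def prod.case by blast
      have kk: "0 \<le> k" "k < int (length (\<sigma> (x 1)))" using ak(1) x(2) unfolding I_def by simp_all
      show "z \<in> Sset \<sigma> X" unfolding Sset_def mem_Collect_eq
        by (rule exI[of _ x], rule exI[of _ k]) (use x kk in simp)
    qed
  qed
  have fin: "finite I" unfolding I_def by (rule finite_SigmaI) auto
  have cl: "closedin fullshift_top (piece ak)" for ak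
  proof -
    obtain a k where ak: "ak = (a, k)" by fastforce
    have proj: "continuous_map fullshift_top (discrete_topology UNIV) (\<lambda>x :: int \<Rightarrow> 'a. x 1)"
      unfolding fullshift_top_def by (rule continuous_map_product_projection) simp
    have "closedin fullshift_top {x \<in> topspace fullshift_top. x 1 \<in> {a}}"
      by (rule closedin_continuous_map_preimage[OF proj]) simp
    then have "closedin fullshift_top (X \<inter> {x. x 1 = a})"
      using X by (intro closedin_Int) (auto simp: subshift_def)
    moreover have "{x \<in> X. x 1 = a} = X \<inter> {x. x 1 = a}" by blast
    ultimately have "compactin fullshift_top {x \<in> X. x 1 = a}"
      using closed_compactin[OF cX, of "X \<inter> {x. x 1 = a}"] by simp
    then have "compactin fullshift_top ((shiftZ k \<circ> morphZ (subdiv \<sigma>)) ` {x \<in> X. x 1 = a})"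
      by (rule image_compactin) (rule continuous_map_compose[OF continuous_morphZ[OF ne_subdiv[OF ne]] continuous_shiftZ])
    then have "compactin fullshift_top (piece ak)" by (simp add: piece_def ak comp_def)
    then show ?thesis by (rule compactin_imp_closedin[OF Hausdorff_fullshift])
  qed
  show ?thesis unfolding SI by (rule closedin_Union) (use fin cl in auto)
qed

lemma S_subshift: "subshift (Sset \<sigma> X)"
proof (rule subshiftI)
  obtain x where x: "x \<in> X" using Xne by blast
  show "Sset \<sigma> X \<noteq> {}" using S_orbit[OF x, of 0] by blast
  show "closedin fullshift_top (Sset \<sigma> X)" by (rule S_closed)
  have sh: "shiftZ m y \<in> Sset \<sigma> X" if y: "y \<in> Sset \<sigma> X" for y m
  proof -
    obtain x k where xk: "x \<in> X" "y = shiftZ k (morphZ (subdiv \<sigma>) x)"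
      using y unfolding Sset_def mem_Collect_eq by blast
    have "shiftZ m y = shiftZ (m + k) (morphZ (subdiv \<sigma>) x)" using xk(2) by simp
    then show ?thesis using S_orbit[OF xk(1), of "m + k"] by simp
  qed
  show "shiftZ 1 y \<in> Sset \<sigma> X" if "y \<in> Sset \<sigma> X" for y using sh[OF that] .
  show "shiftZ (-1) y \<in> Sset \<sigma> X" if "y \<in> Sset \<sigma> X" for y using sh[OF that] .
qed

lemma P_subshift: "subshift (image_subshift (subdiv \<sigma>) X)"
  by (rule image_subshift_subshift[OF Xne])

lemma Y_subshift: "subshift (image_subshift \<sigma> X)"
  by (rule image_subshift_subshift[OF Xne])

lemma P_sub_S: "image_subshift (subdiv \<sigma>) X \<subseteq> Sset \<sigma> X"
proof (rule image_subshift_minimal[OF Xne S_subshift])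
  show "morphZ (subdiv \<sigma>) ` X \<subseteq> Sset \<sigma> X"
  proof
    fix z assume "z \<in> morphZ (subdiv \<sigma>) ` X"
    then obtain x where "x \<in> X" "z = morphZ (subdiv \<sigma>) x" by blast
    then show "z \<in> Sset \<sigma> X" using S_orbit[of x 0] by simp
  qed
qed

lemma pi_in_P: "x \<in> X \<Longrightarrow> morphZ (subdiv \<sigma>) x \<in> image_subshift (subdiv \<sigma>) X"
  using image_subshift_contains[OF Xne] by blast

lemma S_letters:
  assumes "z \<in> Sset \<sigma> X" shows "z i \<in> (\<Union>a. set (subdiv \<sigma> a))"
proof -
  obtain x k where z: "z = shiftZ k (morphZ (subdiv \<sigma>) x)" using assms by (auto simp: Sset_def)
  obtain n where n: "cumlen (subdiv \<sigma>) x (n - 1) < i + k" "i + k \<le> cumlen (subdiv \<sigma>) x n"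
    using block_exists[OF ne_subdiv[OF ne]] by blast
  have "nat (i + k - cumlen (subdiv \<sigma>) x (n - 1) - 1) < length (subdiv \<sigma> (x n))"
    using n cumlen_rec[of "subdiv \<sigma>" x n] by simp
  then have "subdiv \<sigma> (x n) ! nat (i + k - cumlen (subdiv \<sigma>) x (n - 1) - 1) \<in> set (subdiv \<sigma> (x n))"
    by (rule nth_mem)
  then show ?thesis using morphZ_eq[OF ne_subdiv[OF ne] n] z by auto
qed

lemma cP: "compactin fullshift_top (image_subshift (subdiv \<sigma>) X)"
proof (rule compactin_finite_letters)
  show "finite (\<Union>a. set (subdiv \<sigma> a))" by simp
  show "closedin fullshift_top (image_subshift (subdiv \<sigma>) X)" using P_subshift by (simp add: subshift_def)
  show "z i \<in> (\<Union>a. set (subdiv \<sigma> a))" if "z \<in> image_subshift (subdiv \<sigma>) X" for z i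
    using that P_sub_S S_letters by blast
qed

lemma contA: "continuous_map fullshift_top fullshift_top (morphZ (subdiv_letter \<sigma>))"
  by (rule continuous_morphZ[OF ne_subdiv_letter])

lemma AP_eq: "morphZ (subdiv_letter \<sigma>) ` image_subshift (subdiv \<sigma>) X = image_subshift \<sigma> X"
proof
  let ?A = "morphZ (subdiv_letter \<sigma>)"
  let ?P = "image_subshift (subdiv \<sigma>) X"
  let ?Y = "image_subshift \<sigma> X"
  obtain x0 where x0: "x0 \<in> X" using Xne by blast
  have Ay: "?A (morphZ (subdiv \<sigma>) x) \<in> ?Y" if "x \<in> X" for x
    using alpha_pi[OF ne] image_subshift_contains[OF Xne] that by blast
  show "?A ` ?P \<subseteq> ?Y"
  proof -
    define Q where "Q = {z \<in> topspace fullshift_top. ?A z \<in> ?Y}"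
    have "subshift Q"
    proof (rule subshiftI)
      show "Q \<noteq> {}" using Ay[OF x0] by (auto simp: Q_def)
      show "closedin fullshift_top Q" unfolding Q_def
        by (rule closedin_continuous_map_preimage[OF contA]) (use Y_subshift in \<open>simp add: subshift_def\<close>)
      show "shiftZ 1 y \<in> Q" if "y \<in> Q" for y
        using that subshift_shift[OF Y_subshift] by (simp add: Q_def alpha_shift)
      show "shiftZ (-1) y \<in> Q" if "y \<in> Q" for y
        using that subshift_shift[OF Y_subshift] by (simp add: Q_def alpha_shift)
    qed
    moreover have "morphZ (subdiv \<sigma>) ` X \<subseteq> Q" using Ay by (auto simp: Q_def)
    ultimately have "?P \<subseteq> Q" by (rule image_subshift_minimal[OF Xne])
    then show ?thesis by (auto simp: Q_def)
  qed
  show "?Y \<subseteq> ?A ` ?P"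
  proof (rule image_subshift_minimal[OF Xne])
    show "subshift (?A ` ?P)"
    proof (rule subshiftI)
      show "?A ` ?P \<noteq> {}" using pi_in_P[OF x0] by blast
      show "closedin fullshift_top (?A ` ?P)"
        by (rule compactin_imp_closedin[OF Hausdorff_fullshift image_compactin[OF cP contA]])
      show "shiftZ 1 y \<in> ?A ` ?P" if y: "y \<in> ?A ` ?P" for y
      proof -
        obtain z where z: "z \<in> ?P" "y = ?A z" using y by blast
        then have "shiftZ 1 z \<in> ?P" using subshift_shift[OF P_subshift] by blast
        moreover have "shiftZ 1 y = ?A (shiftZ 1 z)" using z(2) by (simp only: alpha_shift)
        ultimately show ?thesis by blast
      qed
      show "shiftZ (-1) y \<in> ?A ` ?P" if y: "y \<in> ?A ` ?P" for y
      proof -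
        obtain z where z: "z \<in> ?P" "y = ?A z" using y by blast
        then have "shiftZ (-1) z \<in> ?P" using subshift_shift[OF P_subshift] by blast
        moreover have "shiftZ (-1) y = ?A (shiftZ (-1) z)" using z(2) by (simp only: alpha_shift)
        ultimately show ?thesis by blast
      qed
    qed
    show "morphZ \<sigma> ` X \<subseteq> ?A ` ?P"
    proof
      fix y assume "y \<in> morphZ \<sigma> ` X"
      then obtain x where "x \<in> X" "y = morphZ \<sigma> x" by blast
      then show "y \<in> ?A ` ?P" using pi_in_P alpha_pi[OF ne] by (metis image_eqI)
    qed
  qed
qed

lemma inj_iff_rec: "inj_on (morphZ (subdiv_letter \<sigma>)) (image_subshift (subdiv \<sigma>) X) \<longleftrightarrow> recognizable \<sigma> X"
proof
  let ?A = "morphZ (subdiv_letter \<sigma>)"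
  let ?P = "image_subshift (subdiv \<sigma>) X"
  assume i: "inj_on ?A ?P"
  show "recognizable \<sigma> X"
    unfolding recognizable_def
  proof (intro ballI allI impI)
    fix x x' k l y
    assume x: "x \<in> X" "x' \<in> X" and H: "0 \<le> k \<and> k \<le> int (length (\<sigma> (x 1))) - 1 \<and>
      0 \<le> l \<and> l \<le> int (length (\<sigma> (x' 1))) - 1 \<and> y = shiftZ k (morphZ \<sigma> x) \<and> y = shiftZ l (morphZ \<sigma> x')"
    then have k: "0 \<le> k" "k < int (length (\<sigma> (x 1)))" and l: "0 \<le> l" "l < int (length (\<sigma> (x' 1)))"
      and eq: "shiftZ k (morphZ \<sigma> x) = shiftZ l (morphZ \<sigma> x')" by auto
    define z where "z = shiftZ k (morphZ (subdiv \<sigma>) x)"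
    define z' where "z' = shiftZ l (morphZ (subdiv \<sigma>) x')"
    have zP: "z \<in> ?P" "z' \<in> ?P" unfolding z_def z'_def
      using subshift_shift[OF P_subshift pi_in_P] x by auto
    have "?A z = ?A z'" unfolding z_def z'_def alpha_shift alpha_pi[OF ne] by (rule eq)
    then have zz: "z = z'" using i zP by (auto dest: inj_onD)
    have "z 1 = z' 1" using zz by simp
    then have "(x 1, nat (k + 1)) = (x' 1, nat (l + 1))"
      unfolding z_def z'_def pi_at_1[where \<sigma>=\<sigma> and x=x and k=k, OF ne k(1) k(2)]
        pi_at_1[where \<sigma>=\<sigma> and x=x' and k=l, OF ne l(1) l(2)] .
    then have kl: "k = l" using k l by auto
    then have "morphZ (subdiv \<sigma>) x = morphZ (subdiv \<sigma>) x'" using zz unfolding z_def z'_def by (rule_tac shiftZ_inj) simp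
    then have "x = x'" by (rule pi_inj[OF ne])
    then show "x = x' \<and> k = l" using kl by simp
  qed
next
  let ?A = "morphZ (subdiv_letter \<sigma>)"
  let ?P = "image_subshift (subdiv \<sigma>) X"
  assume r: "recognizable \<sigma> X"
  show "inj_on ?A ?P"
  proof (rule inj_onI)
    fix z z' assume z: "z \<in> ?P" "z' \<in> ?P" and e: "?A z = ?A z'"
    obtain x k where xk: "x \<in> X" "0 \<le> k" "k < int (length (\<sigma> (x 1)))" "z = shiftZ k (morphZ (subdiv \<sigma>) x)"
      using z(1) P_sub_S by (auto simp: Sset_def)
    obtain x' l where xl: "x' \<in> X" "0 \<le> l" "l < int (length (\<sigma> (x' 1)))" "z' = shiftZ l (morphZ (subdiv \<sigma>) x')"
      using z(2) P_sub_S by (auto simp: Sset_def)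
    have "shiftZ k (morphZ \<sigma> x) = shiftZ l (morphZ \<sigma> x')"
      using e unfolding xk(4) xl(4) alpha_shift alpha_pi[OF ne] .
    then have "x = x' \<and> k = l" by (rule recD[OF ne r xk(1) xl(1) xk(2) xk(3) xl(2) xl(3)])
    then show "z = z'" using xk(4) xl(4) by simp
  qed
qed

lemma iso_iff_inj:
  "subshift_iso (image_subshift (subdiv \<sigma>) X) (image_subshift \<sigma> X) (morphZ (subdiv_letter \<sigma>))
   \<longleftrightarrow> inj_on (morphZ (subdiv_letter \<sigma>)) (image_subshift (subdiv \<sigma>) X)"
proof
  let ?A = "morphZ (subdiv_letter \<sigma>)"
  let ?P = "image_subshift (subdiv \<sigma>) X"
  let ?Y = "image_subshift \<sigma> X"
  assume "subshift_iso ?P ?Y ?A"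
  then have "homeomorphic_map (subtopology fullshift_top ?P) (subtopology fullshift_top ?Y) ?A"
    by (simp add: subshift_iso_def)
  then show "inj_on ?A ?P" using homeomorphic_imp_injective_map by fastforce
next
  let ?A = "morphZ (subdiv_letter \<sigma>)"
  let ?P = "image_subshift (subdiv \<sigma>) X"
  let ?Y = "image_subshift \<sigma> X"
  assume i: "inj_on ?A ?P"
  have "homeomorphic_map (subtopology fullshift_top ?P) (subtopology fullshift_top ?Y) ?A"
  proof (rule continuous_imp_homeomorphic_map)
    show "continuous_map (subtopology fullshift_top ?P) (subtopology fullshift_top ?Y) ?A"
      by (rule continuous_map_into_subtopology[OF continuous_map_from_subtopology[OF contA]])
         (use AP_eq in auto)
    show "compact_space (subtopology fullshift_top ?P)" by (rule compact_space_subtopology[OF cP])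
    show "Hausdorff_space (subtopology fullshift_top ?Y)"
      by (rule Hausdorff_space_subtopology[OF Hausdorff_fullshift])
    show "?A ` topspace (subtopology fullshift_top ?P) = topspace (subtopology fullshift_top ?Y)"
      using AP_eq by simp
    show "inj_on ?A (topspace (subtopology fullshift_top ?P))" using i by simp
  qed
  then show "subshift_iso ?P ?Y ?A" by (simp add: subshift_iso_def alpha_shift)
qed

lemma prop_main:
  "(recognizable \<sigma> X
     \<longleftrightarrow> subshift_iso (image_subshift (subdiv \<sigma>) X) (image_subshift \<sigma> X) (morphZ (subdiv_letter \<sigma>)))
   \<and> (recognizable \<sigma> X
     \<longleftrightarrow> orbit_injective (subdiv_letter \<sigma>) (image_subshift (subdiv \<sigma>) X)
         \<and> period_preserving (subdiv_letter \<sigma>) (image_subshift (subdiv \<sigma>) X))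
   \<and> (recognizable \<sigma> X \<longleftrightarrow> orbit_injective \<sigma> X \<and> period_preserving \<sigma> X)"
proof (intro conjI)
  show "recognizable \<sigma> X
     \<longleftrightarrow> subshift_iso (image_subshift (subdiv \<sigma>) X) (image_subshift \<sigma> X) (morphZ (subdiv_letter \<sigma>))"
    using iso_iff_inj inj_iff_rec by simp
  have "orbit_injective (subdiv_letter \<sigma>) (image_subshift (subdiv \<sigma>) X)
         \<and> period_preserving (subdiv_letter \<sigma>) (image_subshift (subdiv \<sigma>) X)
      \<longleftrightarrow> recognizable (subdiv_letter \<sigma>) (image_subshift (subdiv \<sigma>) X)"
    using rec_iff_oi_pp[OF ne_subdiv_letter[of \<sigma>] P_subshift cP] by simp
  also have "\<dots> \<longleftrightarrow> inj_on (morphZ (subdiv_letter \<sigma>)) (image_subshift (subdiv \<sigma>) X)"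
    by (rule letter_rec_iff[OF subdiv_letter_len])
  also have "\<dots> \<longleftrightarrow> recognizable \<sigma> X" by (rule inj_iff_rec)
  finally show "recognizable \<sigma> X
     \<longleftrightarrow> orbit_injective (subdiv_letter \<sigma>) (image_subshift (subdiv \<sigma>) X)
         \<and> period_preserving (subdiv_letter \<sigma>) (image_subshift (subdiv \<sigma>) X)" by simp
  show "recognizable \<sigma> X \<longleftrightarrow> orbit_injective \<sigma> X \<and> period_preserving \<sigma> X"
    by (rule rec_iff_oi_pp[OF ne X cX])
qed

end

theorem proposition3p8:
  fixes \<sigma> :: "'a::finite \<Rightarrow> 'b::finite list"
    and X :: "(int \<Rightarrow> 'a) set"
  assumes "non_erasing \<sigma>"
    and "subshift X"
  shows "(recognizable \<sigma> X
           \<longleftrightarrow> subshift_iso (image_subshift (subdiv \<sigma>) X) (image_subshift \<sigma> X)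
                 (morphZ (subdiv_letter \<sigma>)))
       \<and> (recognizable \<sigma> X
           \<longleftrightarrow> orbit_injective (subdiv_letter \<sigma>) (image_subshift (subdiv \<sigma>) X)
               \<and> period_preserving (subdiv_letter \<sigma>) (image_subshift (subdiv \<sigma>) X))
       \<and> (recognizable \<sigma> X
           \<longleftrightarrow> orbit_injective \<sigma> X \<and> period_preserving \<sigma> X)"
  by (rule prop_main[OF assms])

end
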